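(* Suppose Assumptions A, B($\gamma$), C($\gamma$) are satisfied for some $\gamma\in(0,1]$. Let $\phi\in C^\infty_0(\mathbb{R}^d)$ and $T\in(0,\infty)$. Then the operators $$u\mapsto\int_0^{\cdot}(b^i_tD_iu_t,\phi)\,dt,\qquad u\mapsto\int_0^{\cdot}(\mathfrak{b}^i_tu_t,D_i\phi)\,dt,\qquad u\mapsto\int_0^{\cdot}(c_tu_t,\phi)\,dt$$ are continuous as operators from $\mathbb{W}^1_p(-\infty,\infty)$ to $\mathcal{L}_p([-T,T])$.
   Context: Fix $d\ge1$, $p\in(1,\infty)$, $p'=p/(p-1)$. $\mathcal{L}_p=\mathcal{L}_p(\mathbb{R}^d)$; $W^1_p$ the Sobolev space of $u\in\mathcal{L}_p$ with $Du\in\mathcal{L}_p$; $(\cdot,\cdot)$ the $L_2(\mathbb{R}^d)$ pairing; $D_i=\partial/\partial x^i$; summation convention. $\mathbb{W}^1_p(-\infty,\infty)=\mathcal{L}_p(\mathbb{R};W^1_p)$. $B_\rho(x)$ open ball. Coefficients $a^{ij}_t(x),\mathfrak{b}^i_t(x),b^i_t(x),c_t(x)$ on $\mathbb{R}\times\mathbb{R}^d$; $\mathfrak{b}=(\mathfrak{b}^i)$, $b=(b^i)$. Fixed constants: $K\ge0$, $\rho_0,\rho_1\in(0,1]$, $q=q(d,p)$ with $q>\min(d,p)$, $q>\min(d,p')$, $q\ge\max(d,p,p')$. Assumption A: (i) $a,\mathfrak{b},b,c$ real-valued Borel measurable, $c\ge0$; (ii) there is $\delta>0$ with $a^{ij}\xi^i\xi^j\ge\delta|\xi|^2$,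 $|a^{ij}|\le\delta^{-1}$; (iii) for every $x$, $t\mapsto\int_{B_1(0)}(|\mathfrak{b}_t(x+y)|+|b_t(x+y)|+c_t(x+y))\,dy$ is locally integrable to the power $p'$ on $\mathbb{R}$. Assumption B($\gamma$): for all $(t,x)$, $\int_{B_{\rho_1}(x)}\int_{B_{\rho_1}(x)}(|\mathfrak{b}_t(y)-\mathfrak{b}_t(z)|^q+|b_t(y)-b_t(z)|^q+|c_t(y)-c_t(z)|^q)\,dy\,dz\le K1_{q>d}+\rho_1^d\gamma$. Assumption C($\gamma$): for all $\rho\in(0,\rho_0]$, $s\in\mathbb{R}$, $i,j$: $\rho^{-2d-2}\int_s^{s+\rho^2}\sup_{x}\int_{B_\rho(x)}\int_{B_\rho(x)}|a^{ij}_t(y)-a^{ij}_t(z)|\,dy\,dz\,dt\le\gamma$. *)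

theory Defs
  imports "HOL-Analysis.Analysis"
begin

text \<open>Points of R^d are vectors of type real^'d; d = CARD('d).\<close>

definition partial :: "'d::finite \<Rightarrow> (real^'d \<Rightarrow> real) \<Rightarrow> real^'d \<Rightarrow> real" where
  "partial i f = (\<lambda>x. deriv (\<lambda>s. f (x + s *\<^sub>R axis i 1)) 0)"

definition grad :: "(real^'d::finite \<Rightarrow> real) \<Rightarrow> real^'d \<Rightarrow> real^'d" where
  "grad f = (\<lambda>x. \<chi> i. partial i f x)"

coinductive smooth_fn :: "(real^'d::finite \<Rightarrow> real) \<Rightarrow> bool" where
  "continuous_on UNIV f \<Longrightarrow>
   (\<forall>i x. (\<lambda>s. f (x + s *\<^sub>R axis i 1)) differentiable (at 0)) \<Longrightarrow>
   (\<forall>i. smooth_fn (partial i f)) \<Longrightarrow> smooth_fn f"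

definition test_fn :: "(real^'d::finite \<Rightarrow> real) \<Rightarrow> bool" where
  "test_fn \<phi> \<longleftrightarrow> smooth_fn \<phi> \<and> compact (closure {x. \<phi> x \<noteq> 0})"

definition weak_grad :: "(real^'d::finite \<Rightarrow> real) \<Rightarrow> (real^'d \<Rightarrow> real^'d) \<Rightarrow> bool" where
  "weak_grad f g \<longleftrightarrow>
     (\<forall>\<psi>. test_fn \<psi> \<longrightarrow> (\<forall>i.
        integrable lborel (\<lambda>x. f x * partial i \<psi> x) \<and>
        integrable lborel (\<lambda>x. g x $ i * \<psi> x) \<and>
        (LINT x|lborel. f x * partial i \<psi> x) = - (LINT x|lborel. g x $ i * \<psi> x)))"

text \<open>Membership in W^1_p(-infty,infty) = L_p(R; W^1_p): u together with its
  (time-dependent) weak gradient Du.\<close>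
definition in_W :: "real \<Rightarrow> (real \<Rightarrow> real^'d::finite \<Rightarrow> real) \<Rightarrow> (real \<Rightarrow> real^'d \<Rightarrow> real^'d) \<Rightarrow> bool" where
  "in_W p u Du \<longleftrightarrow>
     (\<lambda>(t,x). u t x) \<in> borel_measurable (lborel \<Otimes>\<^sub>M lborel) \<and>
     (\<lambda>(t,x). Du t x) \<in> borel_measurable (lborel \<Otimes>\<^sub>M lborel) \<and>
     (\<integral>\<^sup>+ t. \<integral>\<^sup>+ x. ennreal (\<bar>u t x\<bar> powr p + norm (Du t x) powr p) \<partial>lborel \<partial>lborel) < \<infinity> \<and>
     (AE t in lborel. weak_grad (u t) (Du t))"

definition W_dist :: "real \<Rightarrow> (real \<Rightarrow> real^'d::finite \<Rightarrow> real) \<Rightarrow> (real \<Rightarrow> real^'d \<Rightarrow> real^'d)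
    \<Rightarrow> (real \<Rightarrow> real^'d \<Rightarrow> real) \<Rightarrow> (real \<Rightarrow> real^'d \<Rightarrow> real^'d) \<Rightarrow> ennreal" where
  "W_dist p u Du v Dv =
     (\<integral>\<^sup>+ t. \<integral>\<^sup>+ x. ennreal (\<bar>u t x - v t x\<bar> powr p + norm (Du t x - Dv t x) powr p) \<partial>lborel \<partial>lborel)"

definition Lp_dist :: "real \<Rightarrow> real \<Rightarrow> (real \<Rightarrow> real) \<Rightarrow> (real \<Rightarrow> real) \<Rightarrow> ennreal" where
  "Lp_dist p T F G = (\<integral>\<^sup>+ s\<in>{-T..T}. ennreal (\<bar>F s - G s\<bar> powr p) \<partial>lborel)"

text \<open>An operator of the form u \<mapsto> int_0^. h(u,t) dt, where h u Du t = (integrand in x)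
  integrated over R^d, is well defined and continuous from W^1_p(-infty,infty) to L_p([-T,T]).\<close>
definition cont_op :: "real \<Rightarrow> real \<Rightarrow>
    ((real \<Rightarrow> real^'d::finite \<Rightarrow> real) \<Rightarrow> (real \<Rightarrow> real^'d \<Rightarrow> real^'d) \<Rightarrow> real \<Rightarrow> real^'d \<Rightarrow> real) \<Rightarrow> bool" where
  "cont_op p T h \<longleftrightarrow>
    (let Op = (\<lambda>u Du s. LBINT t=0..s. (LINT x|lborel. h u Du t x)) in
     (\<forall>u Du. in_W p u Du \<longrightarrow>
        (AE t in lborel. integrable lborel (h u Du t)) \<and>
        (\<forall>s\<in>{-T..T}. interval_lebesgue_integrable lborel 0 s (\<lambda>t. LINT x|lborel. h u Du t x)) \<and>
        Op u Du \<in> borel_measurable (restrict_space lborel {-T..T}) \<and>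
        (\<integral>\<^sup>+ s\<in>{-T..T}. ennreal (\<bar>Op u Du s\<bar> powr p) \<partial>lborel) < \<infinity>) \<and>
     (\<forall>u Du. in_W p u Du \<longrightarrow> (\<forall>\<epsilon>>0. \<exists>\<delta>>0. \<forall>v Dv. in_W p v Dv \<longrightarrow>
        W_dist p u Du v Dv < ennreal \<delta> \<longrightarrow> Lp_dist p T (Op u Du) (Op v Dv) < ennreal \<epsilon>)))"

definition assumption_A :: "real \<Rightarrow> (real \<Rightarrow> real^'d::finite \<Rightarrow> real^'d^'d) \<Rightarrow> (real \<Rightarrow> real^'d \<Rightarrow> real^'d)
    \<Rightarrow> (real \<Rightarrow> real^'d \<Rightarrow> real^'d) \<Rightarrow> (real \<Rightarrow> real^'d \<Rightarrow> real) \<Rightarrow> bool" where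
  "assumption_A p a bb b c \<longleftrightarrow>
    (\<forall>i j. (\<lambda>(t,x). a t x $ i $ j) \<in> borel_measurable borel) \<and>
    (\<lambda>(t,x). bb t x) \<in> borel_measurable borel \<and>
    (\<lambda>(t,x). b t x) \<in> borel_measurable borel \<and>
    (\<lambda>(t,x). c t x) \<in> borel_measurable borel \<and>
    (\<forall>t x. c t x \<ge> 0) \<and>
    (\<exists>\<delta>>0. (\<forall>t x \<xi>. (\<Sum>i\<in>UNIV. \<Sum>j\<in>UNIV. a t x $ i $ j * \<xi> $ i * \<xi> $ j) \<ge> \<delta> * (norm \<xi>)\<^sup>2) \<and>
            (\<forall>t x i j. \<bar>a t x $ i $ j\<bar> \<le> 1 / \<delta>)) \<and>
    (\<forall>x. let I = (\<lambda>t. \<integral>\<^sup>+ y\<in>ball 0 1. ennreal (norm (bb t (x + y)) + norm (b t (x + y)) + c t (x + y)) \<partial>lborel)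
         in (AE t in lborel. I t < \<infinity>) \<and>
            (\<forall>r1 r2. (\<integral>\<^sup>+ t\<in>{r1..r2}. ennreal (enn2real (I t) powr (p / (p - 1))) \<partial>lborel) < \<infinity>))"

definition assumption_B :: "real \<Rightarrow> real \<Rightarrow> real \<Rightarrow> real \<Rightarrow> (real \<Rightarrow> real^'d::finite \<Rightarrow> real^'d)
    \<Rightarrow> (real \<Rightarrow> real^'d \<Rightarrow> real^'d) \<Rightarrow> (real \<Rightarrow> real^'d \<Rightarrow> real) \<Rightarrow> bool" where
  "assumption_B q K \<rho>1 \<gamma> bb b c \<longleftrightarrow>
    (\<forall>t x. (\<integral>\<^sup>+ y\<in>ball x \<rho>1. \<integral>\<^sup>+ z\<in>ball x \<rho>1.
              ennreal (norm (bb t y - bb t z) powr q + norm (b t y - b t z) powr q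
                       + \<bar>c t y - c t z\<bar> powr q) \<partial>lborel \<partial>lborel)
           \<le> ennreal ((if q > real CARD('d) then K else 0) + \<rho>1 ^ CARD('d) * \<gamma>))"

definition assumption_C :: "real \<Rightarrow> real \<Rightarrow> (real \<Rightarrow> real^'d::finite \<Rightarrow> real^'d^'d) \<Rightarrow> bool" where
  "assumption_C \<rho>0 \<gamma> a \<longleftrightarrow>
    (\<forall>\<rho> s i j. 0 < \<rho> \<and> \<rho> \<le> \<rho>0 \<longrightarrow>
       ennreal (\<rho> powr (- (2 * real CARD('d) + 2))) *
       (\<integral>\<^sup>+ t\<in>{s..s + \<rho>\<^sup>2}. (SUP x. \<integral>\<^sup>+ y\<in>ball x \<rho>. \<integral>\<^sup>+ z\<in>ball x \<rho>.
            ennreal \<bar>a t y $ i $ j - a t z $ i $ j\<bar> \<partial>lborel \<partial>lborel) \<partial>lborel)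
       \<le> ennreal \<gamma>)"

end

theory Submission
  imports Defs
begin


lemma norm_int_le_nn:
  "ennreal (norm (integral\<^sup>L M f)) \<le> (\<integral>\<^sup>+ x. ennreal (norm (f x)) \<partial>M)"
  by (cases "integrable M f") (auto simp: integral_norm_bound_ennreal not_integrable_integral_eq)

lemma young_eps:
  fixes p r g a e :: real
  assumes p: "p > 1" and r: "r = p / (p - 1)" and g: "g \<ge> 0" and a: "a \<ge> 0" and e: "e > 0"
  shows "g * a \<le> e powr (-r) * g powr r / r + e powr p * a powr p / p"
proof -
  have r1: "r > 1" using p unfolding r by (simp add: less_divide_eq)
  have rp: "1 / r + 1 / p = 1" using p unfolding r by (simp add: field_simps)
  have "(g / e) * (e * a) \<le> (g / e) powr r / r + (e * a) powr p / p"
    by (rule Youngs_inequality) (use r1 p rp g a e in auto)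
  moreover have "(g / e) * (e * a) = g * a" using e by simp
  moreover have "(g / e) powr r = e powr (-r) * g powr r"
    using g e by (simp add: powr_divide powr_minus_divide)
  moreover have "(e * a) powr p = e powr p * a powr p"
    using a e by (simp add: powr_mult)
  ultimately show ?thesis by simp
qed

lemma slice_meas:
  assumes "(\<lambda>(t,x). f t x) \<in> borel_measurable (M \<Otimes>\<^sub>M N)" "t \<in> space M"
  shows "f t \<in> borel_measurable N"
  using measurable_Pair2[OF assms] by simp

lemma pointwise_young:
  fixes p r e g u :: real and w :: "'a::real_normed_vector"
  assumes p: "p > 1" and r: "r = p / (p - 1)" and e: "e > 0" and g: "g \<ge> 0"
    and hb: "\<bar>H\<bar> \<le> g * (\<bar>u\<bar> + norm w)"
  shows "\<bar>H\<bar> \<le> (2 * e powr (-r) / r) * g powr r + (e powr p / p) * (\<bar>u\<bar> powr p + norm w powr p)"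
proof -
  have 1: "g * \<bar>u\<bar> \<le> e powr (-r) * g powr r / r + e powr p * \<bar>u\<bar> powr p / p"
    by (rule young_eps[OF p r g _ e]) simp
  have 2: "g * norm w \<le> e powr (-r) * g powr r / r + e powr p * norm w powr p / p"
    by (rule young_eps[OF p r g _ e]) simp
  have "(2 * e powr (-r) / r) * g powr r + (e powr p / p) * (\<bar>u\<bar> powr p + norm w powr p)
     = (e powr (-r) * g powr r / r + e powr p * \<bar>u\<bar> powr p / p) + (e powr (-r) * g powr r / r + e powr p * norm w powr p / p)"
    by (simp add: add_divide_distrib algebra_simps)
  then show ?thesis using hb 1 2 by (simp add: distrib_left)
qed

lemma bound_int:
  fixes h :: "(real \<Rightarrow> 'b::euclidean_space \<Rightarrow> real) \<Rightarrow> (real \<Rightarrow> 'b \<Rightarrow> 'c::euclidean_space) \<Rightarrow> real \<Rightarrow> 'b \<Rightarrow> real"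
  assumes p: "p > 1" and r: "r = p / (p - 1)" and e: "e > 0"
    and mu: "(\<lambda>(t,x). u t x) \<in> borel_measurable (lborel \<Otimes>\<^sub>M lborel)"
    and mDu: "(\<lambda>(t,x). Du t x) \<in> borel_measurable (lborel \<Otimes>\<^sub>M lborel)"
    and hb: "\<And>t x. \<bar>h u Du t x\<bar> \<le> g t x * (\<bar>u t x\<bar> + norm (Du t x))"
    and mg: "(\<lambda>(t,x). g t x) \<in> borel_measurable (lborel \<Otimes>\<^sub>M lborel)"
    and g0: "\<And>t x. g t x \<ge> 0"
    and S: "S \<in> sets lborel"
  shows "(\<integral>\<^sup>+ t\<in>S. (\<integral>\<^sup>+ x. ennreal \<bar>h u Du t x\<bar> \<partial>lborel) \<partial>lborel)
     \<le> ennreal (2 * e powr (-r) / r) * (\<integral>\<^sup>+ t\<in>S. (\<integral>\<^sup>+ x. ennreal (g t x powr r) \<partial>lborel) \<partial>lborel)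
       + ennreal (e powr p / p) * (\<integral>\<^sup>+ t. (\<integral>\<^sup>+ x. ennreal (\<bar>u t x\<bar> powr p + norm (Du t x) powr p) \<partial>lborel) \<partial>lborel)"
proof -
  define A where "A = 2 * e powr (-r) / r"
  define B where "B = e powr p / p"
  have r0: "r > 0" using p unfolding r by simp
  have A0: "A \<ge> 0" and B0: "B \<ge> 0" using r0 p unfolding A_def B_def by auto
  have mG[measurable]: "(\<lambda>(t,x). ennreal (g t x powr r)) \<in> borel_measurable (lborel \<Otimes>\<^sub>M lborel)"
    using mg by measurable
  have mW[measurable]: "(\<lambda>(t,x). ennreal (\<bar>u t x\<bar> powr p + norm (Du t x) powr p)) \<in> borel_measurable (lborel \<Otimes>\<^sub>M lborel)"
    using mu mDu by measurable
  have mGt[measurable]: "(\<lambda>x. ennreal (g t x powr r)) \<in> borel_measurable lborel" for t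
    using slice_meas[OF mG] by simp
  have mWt[measurable]: "(\<lambda>x. ennreal (\<bar>u t x\<bar> powr p + norm (Du t x) powr p)) \<in> borel_measurable lborel" for t
    using slice_meas[OF mW] by simp
  have mIG[measurable]: "(\<lambda>t. \<integral>\<^sup>+ x. ennreal (g t x powr r) \<partial>lborel) \<in> borel_measurable lborel"
    using lborel.borel_measurable_nn_integral[OF mG] by simp
  have mIW[measurable]: "(\<lambda>t. \<integral>\<^sup>+ x. ennreal (\<bar>u t x\<bar> powr p + norm (Du t x) powr p) \<partial>lborel) \<in> borel_measurable lborel"
    using lborel.borel_measurable_nn_integral[OF mW] by simp
  have pt: "ennreal \<bar>h u Du t x\<bar> \<le> ennreal A * ennreal (g t x powr r) + ennreal B * ennreal (\<bar>u t x\<bar> powr p + norm (Du t x) powr p)" for t x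
  proof -
    have "\<bar>h u Du t x\<bar> \<le> A * g t x powr r + B * (\<bar>u t x\<bar> powr p + norm (Du t x) powr p)"
      unfolding A_def B_def by (rule pointwise_young[OF p r e g0 hb])
    then show ?thesis using A0 B0
      by (simp add: ennreal_mult[symmetric] ennreal_plus[symmetric] del: ennreal_plus)
  qed
  define G where "G t x = ennreal (g t x powr r)" for t x
  define W where "W t x = ennreal (\<bar>u t x\<bar> powr p + norm (Du t x) powr p)" for t x
  have [measurable]: "G t \<in> borel_measurable lborel" "W t \<in> borel_measurable lborel" for t
    unfolding G_def W_def using mGt mWt by auto
  have [measurable]: "(\<lambda>t. integral\<^sup>N lborel (G t)) \<in> borel_measurable lborel"
     "(\<lambda>t. integral\<^sup>N lborel (W t)) \<in> borel_measurable lborel"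
    unfolding G_def W_def using mIG mIW by auto
  have "(\<integral>\<^sup>+ t\<in>S. (\<integral>\<^sup>+ x. ennreal \<bar>h u Du t x\<bar> \<partial>lborel) \<partial>lborel)
     \<le> (\<integral>\<^sup>+ t\<in>S. (\<integral>\<^sup>+ x. ennreal A * G t x + ennreal B * W t x \<partial>lborel) \<partial>lborel)"
    unfolding G_def W_def by (intro nn_integral_mono mult_right_mono pt) auto
  also have "\<dots> = (\<integral>\<^sup>+ t\<in>S. (ennreal A * integral\<^sup>N lborel (G t) + ennreal B * integral\<^sup>N lborel (W t)) \<partial>lborel)"
    by (intro nn_integral_cong) (simp add: nn_integral_add nn_integral_cmult)
  also have "\<dots> = ennreal A * (\<integral>\<^sup>+ t\<in>S. integral\<^sup>N lborel (G t) \<partial>lborel)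
       + ennreal B * (\<integral>\<^sup>+ t\<in>S. integral\<^sup>N lborel (W t) \<partial>lborel)"
    using S by (simp add: distrib_right nn_integral_add nn_integral_cmult mult.assoc)
  also have "\<dots> \<le> ennreal A * (\<integral>\<^sup>+ t\<in>S. integral\<^sup>N lborel (G t) \<partial>lborel)
       + ennreal B * (\<integral>\<^sup>+ t. integral\<^sup>N lborel (W t) \<partial>lborel)"
    by (intro add_left_mono mult_left_mono nn_integral_mono) (auto simp: indicator_def)
  finally show ?thesis unfolding A_def B_def G_def W_def .
qed

lemma ein0[simp]: "einterval 0 (ereal s) = {0<..<s}" "einterval (ereal s) 0 = {s<..<0}"
  by (auto simp: einterval_def)

lemma LBINT_bound:
  fixes G :: "real \<Rightarrow> real" and s T :: real
  assumes s: "s \<in> {-T..T}"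
  shows "ennreal \<bar>LBINT t=0..s. G t\<bar> \<le> (\<integral>\<^sup>+ t\<in>{-T..T}. ennreal \<bar>G t\<bar> \<partial>lborel)"
proof -
  have sub: "{0<..<s} \<subseteq> {-T..T}" "{s<..<0} \<subseteq> {-T..T}" using s by auto
  have *: "ennreal \<bar>LINT t|lborel. indicator A t *\<^sub>R G t\<bar> \<le> (\<integral>\<^sup>+ t\<in>{-T..T}. ennreal \<bar>G t\<bar> \<partial>lborel)"
    if "A \<subseteq> {-T..T}" for A
  proof -
    have "ennreal \<bar>LINT t|lborel. indicator A t *\<^sub>R G t\<bar> \<le> (\<integral>\<^sup>+ t. ennreal (norm (indicator A t *\<^sub>R G t)) \<partial>lborel)"
      using norm_int_le_nn[of lborel "\<lambda>t. indicator A t *\<^sub>R G t"] by simp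
    also have "\<dots> \<le> (\<integral>\<^sup>+ t\<in>{-T..T}. ennreal \<bar>G t\<bar> \<partial>lborel)"
      using that by (intro nn_integral_mono) (auto simp: indicator_def)
    finally show ?thesis .
  qed
  show ?thesis
    using *[OF sub(1)] *[OF sub(2)]
    by (simp add: interval_lebesgue_integral_def set_lebesgue_integral_def)
qed

lemma Op_meas:
  fixes F :: "real \<Rightarrow> real"
  assumes mF[measurable]: "F \<in> borel_measurable lborel"
  shows "(\<lambda>s. LBINT t=0..s. F t) \<in> borel_measurable lborel"
proof -
  define K where "K s t = (if 0 \<le> s \<and> 0 < t \<and> t < s then 1 else if s < 0 \<and> s < t \<and> t < 0 then -1 else (0::real))" for s t :: real
  have eq: "(LBINT t=0..s. F t) = (LBINT t. K s t * F t)" for s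
  proof (cases "0 \<le> s")
    case True
    then show ?thesis
      by (simp add: interval_lebesgue_integral_def set_lebesgue_integral_def)
        (intro Bochner_Integration.integral_cong, auto simp: K_def indicator_def)
  next
    case False
    have "(LBINT t=0..s. F t) = - (LBINT t. indicator {s<..<0} t * F t)"
      using False by (simp add: interval_lebesgue_integral_def set_lebesgue_integral_def)
    also have "\<dots> = (LBINT t. - (indicator {s<..<0} t * F t))"
      by (rule integral_minus[symmetric])
    also have "\<dots> = (LBINT t. K s t * F t)"
      using False by (intro Bochner_Integration.integral_cong) (auto simp: K_def indicator_def)
    finally show ?thesis .
  qed
  have mK: "(\<lambda>(s,t). K s t * F t) \<in> borel_measurable (lborel \<Otimes>\<^sub>M lborel)"
    unfolding K_def by measurable
  have "(\<lambda>s. LBINT t. K s t * F t) \<in> borel_measurable lborel"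
    using lborel.borel_measurable_lebesgue_integral[OF mK] by simp
  then show ?thesis by (simp add: eq)
qed

lemma per_u:
  fixes h :: "(real \<Rightarrow> 'b::euclidean_space \<Rightarrow> real) \<Rightarrow> (real \<Rightarrow> 'b \<Rightarrow> 'c::euclidean_space) \<Rightarrow> real \<Rightarrow> 'b \<Rightarrow> real"
  assumes p: "p > 1" and r: "r = p / (p - 1)"
    and mu: "(\<lambda>(t,x). u t x) \<in> borel_measurable (lborel \<Otimes>\<^sub>M lborel)"
    and mDu: "(\<lambda>(t,x). Du t x) \<in> borel_measurable (lborel \<Otimes>\<^sub>M lborel)"
    and Wfin: "(\<integral>\<^sup>+ t. (\<integral>\<^sup>+ x. ennreal (\<bar>u t x\<bar> powr p + norm (Du t x) powr p) \<partial>lborel) \<partial>lborel) < \<infinity>"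
    and hb: "\<And>t x. \<bar>h u Du t x\<bar> \<le> g t x * (\<bar>u t x\<bar> + norm (Du t x))"
    and hm: "(\<lambda>(t,x). h u Du t x) \<in> borel_measurable (lborel \<Otimes>\<^sub>M lborel)"
    and mg: "(\<lambda>(t,x). g t x) \<in> borel_measurable (lborel \<Otimes>\<^sub>M lborel)"
    and g0: "\<And>t x. g t x \<ge> 0"
    and gint: "\<And>T'. (\<integral>\<^sup>+ t\<in>{-T'..T'}. (\<integral>\<^sup>+ x. ennreal (g t x powr r) \<partial>lborel) \<partial>lborel) < \<infinity>"
  shows "\<And>T'. (\<integral>\<^sup>+ t\<in>{-T'..T'}. (\<integral>\<^sup>+ x. ennreal \<bar>h u Du t x\<bar> \<partial>lborel) \<partial>lborel) < \<infinity>"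
    and "AE t in lborel. integrable lborel (h u Du t)"
proof -
  show Hfin: "(\<integral>\<^sup>+ t\<in>{-T'..T'}. (\<integral>\<^sup>+ x. ennreal \<bar>h u Du t x\<bar> \<partial>lborel) \<partial>lborel) < \<infinity>" for T'
  proof -
    have "(\<integral>\<^sup>+ t\<in>{-T'..T'}. (\<integral>\<^sup>+ x. ennreal \<bar>h u Du t x\<bar> \<partial>lborel) \<partial>lborel)
     \<le> ennreal (2 * 1 powr (-r) / r) * (\<integral>\<^sup>+ t\<in>{-T'..T'}. (\<integral>\<^sup>+ x. ennreal (g t x powr r) \<partial>lborel) \<partial>lborel)
       + ennreal (1 powr p / p) * (\<integral>\<^sup>+ t. (\<integral>\<^sup>+ x. ennreal (\<bar>u t x\<bar> powr p + norm (Du t x) powr p) \<partial>lborel) \<partial>lborel)"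
      by (rule bound_int[where h=h and u=u and Du=Du and g=g]) (use p r mu mDu hb mg g0 in auto)
    also have "\<dots> < \<infinity>"
      using gint[of T'] Wfin by (simp add: ennreal_mult_less_top)
    finally show ?thesis .
  qed
  have hm'[measurable]: "(\<lambda>(t,x). ennreal \<bar>h u Du t x\<bar>) \<in> borel_measurable (lborel \<Otimes>\<^sub>M lborel)"
    using hm by measurable
  have mI[measurable]: "(\<lambda>t. \<integral>\<^sup>+ x. ennreal \<bar>h u Du t x\<bar> \<partial>lborel) \<in> borel_measurable lborel"
    using lborel.borel_measurable_nn_integral[OF hm'] by simp
  have "AE t in lborel. (\<integral>\<^sup>+ x. ennreal \<bar>h u Du t x\<bar> \<partial>lborel) * indicator {-real n..real n} t \<noteq> \<infinity>" for n :: nat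
    by (rule nn_integral_PInf_AE) (use Hfin[of "real n"] in auto)
  then have "AE t in lborel. \<forall>n::nat. (\<integral>\<^sup>+ x. ennreal \<bar>h u Du t x\<bar> \<partial>lborel) * indicator {-real n..real n} t \<noteq> \<infinity>"
    by (simp add: AE_all_countable)
  then show "AE t in lborel. integrable lborel (h u Du t)"
  proof (rule eventually_mono)
    fix t assume A: "\<forall>n::nat. (\<integral>\<^sup>+ x. ennreal \<bar>h u Du t x\<bar> \<partial>lborel) * indicator {-real n..real n} t \<noteq> \<infinity>"
    obtain n :: nat where "\<bar>t\<bar> \<le> real n" using real_arch_simple by blast
    then have "t \<in> {-real n..real n}" by auto
    with A have fin: "(\<integral>\<^sup>+ x. ennreal \<bar>h u Du t x\<bar> \<partial>lborel) \<noteq> \<infinity>" by (auto dest: spec[of _ n])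
    show "integrable lborel (h u Du t)"
      by (rule integrableI_bounded) (use slice_meas[OF hm] fin in \<open>auto simp: top.not_eq_extremum\<close>)
  qed
qed

lemma le_enn2real: "ennreal a \<le> X \<Longrightarrow> X < \<infinity> \<Longrightarrow> 0 \<le> a \<Longrightarrow> a \<le> enn2real X"
  using enn2real_mono[of "ennreal a" X] by simp

lemma generic_cont_op:
  fixes h :: "(real \<Rightarrow> real^'d::finite \<Rightarrow> real) \<Rightarrow> (real \<Rightarrow> real^'d \<Rightarrow> real^'d) \<Rightarrow> real \<Rightarrow> real^'d \<Rightarrow> real"
    and g :: "real \<Rightarrow> real^'d \<Rightarrow> real"
  assumes p: "p > 1" and T: "T > 0"
    and hlin: "\<And>u Du v Dv t x. h u Du t x - h v Dv t x = h (\<lambda>t x. u t x - v t x) (\<lambda>t x. Du t x - Dv t x) t x"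
    and hb: "\<And>u Du t x. \<bar>h u Du t x\<bar> \<le> g t x * (\<bar>u t x\<bar> + norm (Du t x))"
    and hm: "\<And>u Du. (\<lambda>(t,x). u t x) \<in> borel_measurable (lborel \<Otimes>\<^sub>M lborel) \<Longrightarrow>
               (\<lambda>(t,x). Du t x) \<in> borel_measurable (lborel \<Otimes>\<^sub>M lborel) \<Longrightarrow>
               (\<lambda>(t,x). h u Du t x) \<in> borel_measurable (lborel \<Otimes>\<^sub>M lborel)"
    and mg: "(\<lambda>(t,x). g t x) \<in> borel_measurable (lborel \<Otimes>\<^sub>M lborel)"
    and g0: "\<And>t x. g t x \<ge> 0"
    and gint: "\<And>T'. (\<integral>\<^sup>+ t\<in>{-T'..T'}. (\<integral>\<^sup>+ x. ennreal (g t x powr (p / (p - 1))) \<partial>lborel) \<partial>lborel) < \<infinity>"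
  shows "cont_op p T h"
proof -
  define r where "r = p / (p - 1)"
  have r0: "r > 0" using p unfolding r_def by simp
  note gint' = gint[folded r_def]
  define F where "F u Du t = (LINT x|lborel. h u Du t x)" for u Du t
  define Op where "Op u Du s = (LBINT t=0..s. F u Du t)" for u Du and s :: real
  define Hs where "Hs u Du = (\<integral>\<^sup>+ t\<in>{-T..T}. (\<integral>\<^sup>+ x. ennreal \<bar>h u Du t x\<bar> \<partial>lborel) \<partial>lborel)" for u Du
  have inW: "(\<lambda>(t,x). u t x) \<in> borel_measurable (lborel \<Otimes>\<^sub>M lborel) \<and>
     (\<lambda>(t,x). Du t x) \<in> borel_measurable (lborel \<Otimes>\<^sub>M lborel) \<and>
     (\<integral>\<^sup>+ t. (\<integral>\<^sup>+ x. ennreal (\<bar>u t x\<bar> powr p + norm (Du t x) powr p) \<partial>lborel) \<partial>lborel) < \<infinity>"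
    if "in_W p u Du" for u Du
    using that unfolding in_W_def by auto
  have Hfin: "Hs u Du < \<infinity>" and AEi: "AE t in lborel. integrable lborel (h u Du t)"
    if "in_W p u Du" for u Du
    using per_u[OF p r_def, where u=u and Du=Du and h=h and g=g] inW[OF that] hb hm mg g0 gint'
    unfolding Hs_def by auto
  have mF: "F u Du \<in> borel_measurable lborel" if "in_W p u Du" for u Du
  proof -
    have "(\<lambda>(t,x). h u Du t x) \<in> borel_measurable (lborel \<Otimes>\<^sub>M lborel)"
      using hm inW[OF that] by auto
    from lborel.borel_measurable_lebesgue_integral[OF this] show ?thesis
      unfolding F_def by simp
  qed
  have Fle: "(\<integral>\<^sup>+ t\<in>{-T..T}. ennreal \<bar>F u Du t\<bar> \<partial>lborel) \<le> Hs u Du" for u Du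
  proof -
    have "ennreal \<bar>F u Du t\<bar> \<le> (\<integral>\<^sup>+ x. ennreal \<bar>h u Du t x\<bar> \<partial>lborel)" for t
      using norm_int_le_nn[of lborel "h u Du t"] by (simp add: F_def)
    then show ?thesis unfolding Hs_def by (intro nn_integral_mono mult_right_mono) auto
  qed
  have Opb: "ennreal \<bar>Op u Du s\<bar> \<le> Hs u Du" if "s \<in> {-T..T}" for u Du s
    using LBINT_bound[OF that, of "F u Du"] Fle[of u Du] unfolding Op_def by simp
  have intg: "interval_lebesgue_integrable lborel 0 s (F u Du)"
    if "in_W p u Du" "s \<in> {-T..T}" for u Du s
  proof -
    have *: "set_integrable lborel A (F u Du)" if A: "A \<subseteq> {-T..T}" "A \<in> sets lborel" for A
      unfolding set_integrable_def
    proof (rule integrableI_bounded)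
      show "(\<lambda>x. indicat_real A x *\<^sub>R F u Du x) \<in> borel_measurable lborel"
        using mF[OF \<open>in_W p u Du\<close>] A by (intro borel_measurable_scaleR borel_measurable_indicator) auto
      have "(\<integral>\<^sup>+ x. ennreal (norm (indicat_real A x *\<^sub>R F u Du x)) \<partial>lborel) \<le> (\<integral>\<^sup>+ t\<in>{-T..T}. ennreal \<bar>F u Du t\<bar> \<partial>lborel)"
        using A(1) by (intro nn_integral_mono) (auto simp: indicator_def subset_iff)
      then have "(\<integral>\<^sup>+ x. ennreal (norm (indicat_real A x *\<^sub>R F u Du x)) \<partial>lborel) \<le> Hs u Du"
        using Fle[of u Du] by (rule order_trans)
      with Hfin[OF \<open>in_W p u Du\<close>] show "(\<integral>\<^sup>+ x. ennreal (norm (indicat_real A x *\<^sub>R F u Du x)) \<partial>lborel) < \<infinity>"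
        by (simp add: order_le_less_trans)
    qed
    show ?thesis using that(2)
      by (auto simp: interval_lebesgue_integrable_def intro!: *)
  qed
  have part1: "(AE t in lborel. integrable lborel (h u Du t)) \<and>
        (\<forall>s\<in>{-T..T}. interval_lebesgue_integrable lborel 0 s (F u Du)) \<and>
        Op u Du \<in> borel_measurable (restrict_space lborel {-T..T}) \<and>
        (\<integral>\<^sup>+ s\<in>{-T..T}. ennreal (\<bar>Op u Du s\<bar> powr p) \<partial>lborel) < \<infinity>"
    if W: "in_W p u Du" for u Du
  proof (intro conjI ballI)
    show "AE t in lborel. integrable lborel (h u Du t)" using AEi[OF W] .
    show "interval_lebesgue_integrable lborel 0 s (F u Du)" if "s \<in> {-T..T}" for s
      using intg[OF W that] .
    have "Op u Du \<in> borel_measurable lborel"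
      unfolding Op_def using Op_meas[OF mF[OF W]] by simp
    then show "Op u Du \<in> borel_measurable (restrict_space lborel {-T..T})"
      by (rule measurable_restrict_space1)
    define c where "c = enn2real (Hs u Du)"
    have c0: "c \<ge> 0" unfolding c_def by simp
    have "\<bar>Op u Du s\<bar> \<le> c" if "s \<in> {-T..T}" for s
      unfolding c_def by (rule le_enn2real[OF Opb[OF that] Hfin[OF W]]) simp
    then have "(\<integral>\<^sup>+ s\<in>{-T..T}. ennreal (\<bar>Op u Du s\<bar> powr p) \<partial>lborel) \<le> (\<integral>\<^sup>+ s\<in>{-T..T}. ennreal (c powr p) \<partial>lborel)"
      using p by (intro nn_integral_mono) (auto simp: indicator_def intro!: ennreal_leI powr_mono2)
    also have "\<dots> = ennreal (c powr p) * ennreal (2 * T)"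
      using T by (simp add: nn_integral_cmult_indicator)
    also have "\<dots> < \<infinity>" by (simp add: ennreal_mult_less_top)
    finally show "(\<integral>\<^sup>+ s\<in>{-T..T}. ennreal (\<bar>Op u Du s\<bar> powr p) \<partial>lborel) < \<infinity>" .
  qed
  have part2: "\<exists>\<delta>>0. \<forall>v Dv. in_W p v Dv \<longrightarrow> W_dist p u Du v Dv < ennreal \<delta> \<longrightarrow> Lp_dist p T (Op u Du) (Op v Dv) < ennreal \<epsilon>"
    if W: "in_W p u Du" and eps: "\<epsilon> > 0" for u Du \<epsilon>
  proof -
    have Gfin: "(\<integral>\<^sup>+ t\<in>{-T..T}. (\<integral>\<^sup>+ x. ennreal (g t x powr r) \<partial>lborel) \<partial>lborel) < \<infinity>"
      using gint' .
    then obtain Gr where G: "(\<integral>\<^sup>+ t\<in>{-T..T}. (\<integral>\<^sup>+ x. ennreal (g t x powr r) \<partial>lborel) \<partial>lborel) = ennreal Gr" "Gr \<ge> 0"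
      by (cases "(\<integral>\<^sup>+ t\<in>{-T..T}. (\<integral>\<^sup>+ x. ennreal (g t x powr r) \<partial>lborel) \<partial>lborel)") auto
    define \<eta> where "\<eta> = (\<epsilon> / (4 * T)) powr (1 / p)"
    have \<eta>0: "\<eta> > 0" unfolding \<eta>_def using eps T by simp
    have \<eta>p: "\<eta> powr p = \<epsilon> / (4 * T)"
      unfolding \<eta>_def using p eps T by (simp add: powr_powr)
    define \<kappa> where "\<kappa> = \<eta> * r / (4 * (Gr + 1))"
    have \<kappa>0: "\<kappa> > 0" unfolding \<kappa>_def using \<eta>0 r0 G(2) by simp
    define e where "e = \<kappa> powr (-1 / r)"
    have e0: "e > 0" unfolding e_def using \<kappa>0 by simp
    have er: "e powr (-r) = \<kappa>" unfolding e_def using \<kappa>0 r0 by (simp add: powr_powr)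
    define A where "A = 2 * e powr (-r) / r"
    define B where "B = e powr p / p"
    have B0: "B > 0" unfolding B_def using e0 p by simp
    have AG: "A * Gr \<le> \<eta> / 2"
    proof -
      have "A = \<eta> / (2 * (Gr + 1))"
        unfolding A_def er \<kappa>_def using r0 G(2) by (simp add: divide_simps)
      then have "A * Gr = \<eta> * (Gr / (2 * (Gr + 1)))" by simp
      also have "\<dots> \<le> \<eta> * (1 / 2)"
        using \<eta>0 G(2) by (intro mult_left_mono) (auto simp: field_simps)
      finally show ?thesis by simp
    qed
    define \<delta> where "\<delta> = \<eta> / (2 * B)"
    have \<delta>0: "\<delta> > 0" unfolding \<delta>_def using \<eta>0 B0 by simp
    show ?thesis
    proof (intro exI[of _ \<delta>] conjI allI impI \<delta>0)
      fix v Dv assume V: "in_W p v Dv" and Wd: "W_dist p u Du v Dv < ennreal \<delta>"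
      obtain w where w: "W_dist p u Du v Dv = ennreal w" "0 \<le> w" "w < \<delta>"
        using Wd by (cases "W_dist p u Du v Dv") (auto simp: ennreal_less_iff)
      define d where "d t x = u t x - v t x" for t x
      define Dd where "Dd t x = Du t x - Dv t x" for t x
      have md: "(\<lambda>(t,x). d t x) \<in> borel_measurable (lborel \<Otimes>\<^sub>M lborel)"
      proof -
        have "(\<lambda>z. (\<lambda>(t,x). u t x) z - (\<lambda>(t,x). v t x) z) \<in> borel_measurable (lborel \<Otimes>\<^sub>M lborel)"
          using inW[OF W] inW[OF V] by (intro borel_measurable_diff) auto
        moreover have "(\<lambda>(t,x). d t x) = (\<lambda>z. (\<lambda>(t,x). u t x) z - (\<lambda>(t,x). v t x) z)"
          by (auto simp: d_def fun_eq_iff)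
        ultimately show ?thesis by simp
      qed
      have mDd: "(\<lambda>(t,x). Dd t x) \<in> borel_measurable (lborel \<Otimes>\<^sub>M lborel)"
      proof -
        have "(\<lambda>z. (\<lambda>(t,x). Du t x) z - (\<lambda>(t,x). Dv t x) z) \<in> borel_measurable (lborel \<Otimes>\<^sub>M lborel)"
          using inW[OF W] inW[OF V] by (intro borel_measurable_diff) auto
        moreover have "(\<lambda>(t,x). Dd t x) = (\<lambda>z. (\<lambda>(t,x). Du t x) z - (\<lambda>(t,x). Dv t x) z)"
          by (auto simp: Dd_def fun_eq_iff)
        ultimately show ?thesis by simp
      qed
      have HB: "Hs d Dd \<le> ennreal A * (\<integral>\<^sup>+ t\<in>{-T..T}. (\<integral>\<^sup>+ x. ennreal (g t x powr r) \<partial>lborel) \<partial>lborel)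
         + ennreal B * (\<integral>\<^sup>+ t. (\<integral>\<^sup>+ x. ennreal (\<bar>d t x\<bar> powr p + norm (Dd t x) powr p) \<partial>lborel) \<partial>lborel)"
        unfolding Hs_def A_def B_def
        by (rule bound_int[where h=h and u=d and Du=Dd and g=g]) (use p md mDd hb mg g0 e0 in \<open>auto simp: r_def\<close>)
      have WX: "(\<integral>\<^sup>+ t. (\<integral>\<^sup>+ x. ennreal (\<bar>d t x\<bar> powr p + norm (Dd t x) powr p) \<partial>lborel) \<partial>lborel) = W_dist p u Du v Dv"
        unfolding W_dist_def d_def Dd_def ..
      have "Hs d Dd \<le> ennreal A * ennreal Gr + ennreal B * W_dist p u Du v Dv" using HB WX G by simp
      moreover have A0: "A \<ge> 0" unfolding A_def using r0 by simp
      ultimately have Hd: "Hs d Dd \<le> ennreal (A * Gr + B * w)"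
        using w G B0
        by (simp add: ennreal_mult[symmetric] ennreal_plus[symmetric] del: ennreal_plus)
      define m where "m = A * Gr + B * w"
      have m0: "m \<ge> 0" unfolding m_def A_def using G(2) w(2) B0 r0 e0 by simp
      have m\<eta>: "m < \<eta>"
      proof -
        have "B * w < B * \<delta>" using w B0 by simp
        also have "B * \<delta> = \<eta> / 2" unfolding \<delta>_def using B0 by simp
        finally show ?thesis using AG unfolding m_def by simp
      qed
      have diff: "\<bar>Op u Du s - Op v Dv s\<bar> \<le> m" if s: "s \<in> {-T..T}" for s
      proof -
        have "Op u Du s - Op v Dv s = (LBINT t=0..s. F u Du t - F v Dv t)"
          unfolding Op_def by (rule interval_lebesgue_integral_diff(2)[symmetric]) (use intg W V s in auto)
        then have "ennreal \<bar>Op u Du s - Op v Dv s\<bar> \<le> (\<integral>\<^sup>+ t\<in>{-T..T}. ennreal \<bar>F u Du t - F v Dv t\<bar> \<partial>lborel)"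
          using LBINT_bound[OF s, of "\<lambda>t. F u Du t - F v Dv t"] by simp
        also have "\<dots> \<le> Hs d Dd"
          unfolding Hs_def
        proof (rule nn_integral_mono_AE)
          show "AE t in lborel. ennreal \<bar>F u Du t - F v Dv t\<bar> * indicator {-T..T} t
                  \<le> (\<integral>\<^sup>+ x. ennreal \<bar>h d Dd t x\<bar> \<partial>lborel) * indicator {-T..T} t"
            using AEi[OF W] AEi[OF V]
          proof eventually_elim
            case (elim t)
            have "F u Du t - F v Dv t = (LINT x|lborel. h u Du t x - h v Dv t x)"
              unfolding F_def using Bochner_Integration.integral_diff[OF elim(1) elim(2)] by simp
            also have "\<dots> = (LINT x|lborel. h d Dd t x)"
              unfolding d_def Dd_def hlin ..
            finally have "ennreal \<bar>F u Du t - F v Dv t\<bar> \<le> (\<integral>\<^sup>+ x. ennreal \<bar>h d Dd t x\<bar> \<partial>lborel)"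
              using norm_int_le_nn[of lborel "h d Dd t"] by simp
            then show ?case by (intro mult_right_mono) auto
          qed
        qed
        also have "\<dots> \<le> ennreal m" using Hd unfolding m_def .
        finally show ?thesis using m0 by simp
      qed
      have "Lp_dist p T (Op u Du) (Op v Dv) \<le> (\<integral>\<^sup>+ s\<in>{-T..T}. ennreal (m powr p) \<partial>lborel)"
        unfolding Lp_dist_def using p diff
        by (intro nn_integral_mono) (auto simp: indicator_def intro!: ennreal_leI powr_mono2)
      also have "\<dots> = ennreal (m powr p * (2 * T))"
        using T m0 by (simp add: nn_integral_cmult_indicator ennreal_mult)
      also have "\<dots> < ennreal \<epsilon>"
      proof (rule ennreal_lessI[OF eps])
        have "m powr p < \<eta> powr p" using m0 m\<eta> p by (intro powr_less_mono2) auto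
        then have "m powr p * (2 * T) < \<eta> powr p * (2 * T)" using T by simp
        also have "\<dots> = \<epsilon> / 2" unfolding \<eta>p using T by simp
        finally show "m powr p * (2 * T) < \<epsilon>" using eps by simp
      qed
      finally show "Lp_dist p T (Op u Du) (Op v Dv) < ennreal \<epsilon>" .
    qed
  qed
  show ?thesis
    unfolding cont_op_def Let_def
    using part1 part2 unfolding Op_def F_def by blast
qed

lemma jensen_nn:
  fixes F :: "'a \<Rightarrow> real"
  assumes r: "r > 1" and mF: "F \<in> borel_measurable M" and F0: "\<And>z. F z \<ge> 0"
    and B: "B \<in> sets M" and mB: "emeasure M B = ennreal m" and m0: "m > 0"
    and a: "(\<integral>\<^sup>+ z\<in>B. ennreal (F z) \<partial>M) = ennreal a" "a \<ge> 0"
    and R: "(\<integral>\<^sup>+ z\<in>B. ennreal (F z powr r) \<partial>M) = ennreal R" "R \<ge> 0"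
  shows "a powr r \<le> m powr (r - 1) * R"
proof (cases "a = 0")
  case True then show ?thesis using m0 R(2) r by simp
next
  case False
  then have a0: "a > 0" using a(2) by simp
  define s where "s = r / (r - 1)"
  define lam where "lam = m powr (1 - r)"
  have s1: "s > 1" unfolding s_def using r by (simp add: less_divide_eq)
  have rs: "1 / r + 1 / s = 1" unfolding s_def using r by (simp add: field_simps)
  have l0: "lam > 0" unfolding lam_def using m0 by simp
  have ls: "lam powr s * m = lam"
  proof -
    have "lam powr s = m powr ((1 - r) * s)" unfolding lam_def by (simp add: powr_powr)
    also have "(1 - r) * s = - r" unfolding s_def using r by (simp add: field_simps)
    finally have "lam powr s * m = m powr (-r) * m powr 1" using m0 by simp
    also have "\<dots> = m powr (1 - r)" by (simp only: powr_add[symmetric]) simp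
    finally show ?thesis unfolding lam_def .
  qed
  have pt: "ennreal ((F z / a) * lam) \<le> ennreal (F z powr r / (a powr r * r) + lam powr s / s)" for z
  proof -
    have "(F z / a) * lam \<le> (F z / a) powr r / r + lam powr s / s"
      by (rule Youngs_inequality) (use r s1 rs F0 a0 l0 in auto)
    also have "(F z / a) powr r = F z powr r / a powr r" using F0 a0 by (simp add: powr_divide)
    finally show ?thesis by (intro ennreal_leI) (simp add: field_simps)
  qed
  have "ennreal lam = ennreal (lam / a) * ennreal a"
    using a0 l0 by (simp add: ennreal_mult[symmetric])
  also have "\<dots> = (\<integral>\<^sup>+ z. ennreal (lam / a) * (ennreal (F z) * indicator B z) \<partial>M)"
    unfolding a(1)[symmetric] by (rule nn_integral_cmult[symmetric]) (use mF B in measurable)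
  also have "\<dots> = (\<integral>\<^sup>+ z\<in>B. ennreal ((F z / a) * lam) \<partial>M)"
  proof (intro nn_integral_cong)
    fix z
    have "ennreal ((F z / a) * lam) = ennreal (lam / a) * ennreal (F z)"
      using a0 l0 F0[of z] by (simp add: ennreal_mult[symmetric])
    then show "ennreal (lam / a) * (ennreal (F z) * indicator B z) = ennreal ((F z / a) * lam) * indicator B z"
      by (simp add: mult.assoc)
  qed
  also have "\<dots> \<le> (\<integral>\<^sup>+ z\<in>B. ennreal (F z powr r / (a powr r * r) + lam powr s / s) \<partial>M)"
    by (intro nn_integral_mono mult_right_mono pt) auto
  also have "\<dots> = (\<integral>\<^sup>+ z\<in>B. ennreal (1 / (a powr r * r)) * ennreal (F z powr r) + ennreal (lam powr s / s) \<partial>M)"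
    using a0 r s1 F0 by (intro nn_integral_cong) (auto simp: ennreal_mult[symmetric] ennreal_plus[symmetric] indicator_def simp del: ennreal_plus)
  also have "\<dots> = ennreal (1 / (a powr r * r)) * ennreal R + ennreal (lam powr s / s) * ennreal m"
    using B mF
    by (simp add: nn_integral_add nn_integral_cmult distrib_right nn_integral_cmult_indicator mult.assoc R(1)[symmetric] mB[symmetric])
  also have "\<dots> = ennreal (R / (a powr r * r) + lam / s)"
    using a0 r s1 R(2) m0 l0 ls
    by (simp add: ennreal_mult[symmetric] ennreal_plus[symmetric] del: ennreal_plus)
  finally have "lam \<le> R / (a powr r * r) + lam / s"
    using a0 r s1 R(2) l0 by (subst (asm) ennreal_le_iff) (auto intro!: add_nonneg_nonneg)
  then have "lam * (1 - 1 / s) \<le> R / (a powr r * r)" by (simp add: algebra_simps)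
  also have "1 - 1 / s = 1 / r" using rs by simp
  finally have "lam * a powr r \<le> R"
    using a0 r by (simp add: field_simps)
  then have "a powr r \<le> R / lam" using l0 by (simp add: field_simps)
  also have "R / lam = m powr (r - 1) * R"
  proof -
    have "m powr (1 - r) * m powr (r - 1) = 1" using m0 by (simp only: powr_add[symmetric]) simp
    then show ?thesis unfolding lam_def using m0 by (simp add: field_simps)
  qed
  finally show ?thesis .
qed

lemma pow_le_1q:
  fixes x r q :: real
  assumes "0 \<le> x" "0 < r" "r \<le> q"
  shows "x powr r \<le> 1 + x powr q"
proof (cases "x \<le> 1")
  case True
  then have "x powr r \<le> 1" using assms by (cases "x = 0") (auto intro!: powr_le1)
  then show ?thesis by (smt (verit) powr_ge_zero)
next
  case False
  then have "x powr r \<le> x powr q" using assms by (intro powr_mono) auto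
  then show ?thesis by simp
qed

lemma sum_powr_le:
  fixes x y r :: real
  assumes "0 \<le> x" "0 \<le> y" "0 < r"
  shows "(x + y) powr r \<le> 2 powr r * (x powr r + y powr r)"
proof -
  have "(x + y) powr r \<le> (2 * max x y) powr r"
    using assms by (intro powr_mono2) auto
  also have "\<dots> = 2 powr r * max x y powr r" using assms by (simp add: powr_mult)
  also have "max x y powr r \<le> x powr r + y powr r"
    by (cases "x \<le> y") (auto simp: max_def)
  finally show ?thesis by simp
qed

lemma ennreal_le_1plus: "x \<le> 1 + y \<Longrightarrow> 0 \<le> y \<Longrightarrow> ennreal x \<le> 1 + ennreal y"
  by (metis ennreal_1 ennreal_leI ennreal_plus zero_le_one)

lemma ball_bound:
  fixes f :: "'a::euclidean_space \<Rightarrow> 'v::euclidean_space"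
  assumes r: "r > 1" and q: "r \<le> q" and mf[measurable]: "f \<in> borel_measurable lborel" and rho: "\<rho> > 0"
    and m: "m = measure lborel (ball x0 \<rho>)"
    and osc: "(\<integral>\<^sup>+ y\<in>ball x0 \<rho>. (\<integral>\<^sup>+ z\<in>ball x0 \<rho>. ennreal (norm (f y - f z) powr q) \<partial>lborel) \<partial>lborel) \<le> ennreal M0"
    and M0: "M0 \<ge> 0"
    and J: "(\<integral>\<^sup>+ z\<in>ball x0 \<rho>. ennreal (norm (f z)) \<partial>lborel) \<le> ennreal I" and I0: "I \<ge> 0"
  shows "(\<integral>\<^sup>+ y\<in>ball x0 \<rho>. ennreal (norm (f y) powr r) \<partial>lborel)
     \<le> ennreal (2 powr r / m * M0 + (2 powr r + 2 powr r * m powr (-r) * I powr r) * m)"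
proof -
  define B where "B = ball x0 \<rho>"
  have Bs[measurable]: "B \<in> sets lborel" unfolding B_def by simp
  have m0: "m > 0" unfolding m using content_ball_pos[OF rho] by simp
  have mB: "emeasure lborel B = ennreal m"
    unfolding m B_def using emeasure_lborel_ball_finite[of x0 \<rho>] by (simp add: emeasure_eq_ennreal_measure)
  define c1 where "c1 = 2 powr r / m"
  define c2 where "c2 = 2 powr r + 2 powr r * m powr (-r) * I powr r"
  have c1: "c1 > 0" unfolding c1_def using m0 by simp
  have c2: "c2 \<ge> 0" unfolding c2_def by simp
  define E where "E y = (\<integral>\<^sup>+ z\<in>B. ennreal (norm (f y - f z) powr q) \<partial>lborel)" for y
  have mE2: "(\<lambda>(y,z). ennreal (norm (f y - f z) powr q) * indicator B z) \<in> borel_measurable (lborel \<Otimes>\<^sub>M lborel)"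
    by measurable
  have mE[measurable]: "E \<in> borel_measurable lborel"
    unfolding E_def using lborel.borel_measurable_nn_integral[OF mE2] by simp
  have pt: "ennreal (norm (f y) powr r) \<le> ennreal c1 * E y + ennreal c2" if y: "y \<in> B" for y
  proof (cases "E y = \<infinity>")
    case True then show ?thesis using c1 by (simp add: ennreal_mult_top)
  next
    case False
    then obtain e where e: "E y = ennreal e" "e \<ge> 0" by (cases "E y") auto
    define F where "F z = norm (f y - f z)" for z
    have mF[measurable]: "F \<in> borel_measurable lborel" unfolding F_def by measurable
    have F0: "F z \<ge> 0" for z unfolding F_def by simp
    have "(\<integral>\<^sup>+ z\<in>B. ennreal (F z powr r) \<partial>lborel) \<le> (\<integral>\<^sup>+ z\<in>B. (1 + ennreal (F z powr q)) \<partial>lborel)"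
      using pow_le_1q[OF F0, of r q] r q
      by (intro nn_integral_mono mult_right_mono ennreal_le_1plus) auto
    also have "\<dots> = ennreal m + E y"
      unfolding E_def F_def using mB Bs by (simp add: distrib_right nn_integral_add nn_integral_cmult_indicator nn_integral_indicator)
    finally have Rle: "(\<integral>\<^sup>+ z\<in>B. ennreal (F z powr r) \<partial>lborel) \<le> ennreal (m + e)"
      using e m0 by simp
    then obtain R where R: "(\<integral>\<^sup>+ z\<in>B. ennreal (F z powr r) \<partial>lborel) = ennreal R" "R \<ge> 0"
      by (cases "(\<integral>\<^sup>+ z\<in>B. ennreal (F z powr r) \<partial>lborel)") (auto simp: top_unique)
    have "ennreal R \<le> ennreal (m + e)" using Rle unfolding R(1) .
    then have Rme: "R \<le> m + e" using ennreal_le_iff[of "m + e" R] m0 e by simp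
    have "(\<integral>\<^sup>+ z\<in>B. ennreal (F z) \<partial>lborel) \<le> (\<integral>\<^sup>+ z\<in>B. (1 + ennreal (F z powr r)) \<partial>lborel)"
      using pow_le_1q[OF F0, of 1 r] r F0
      by (intro nn_integral_mono mult_right_mono ennreal_le_1plus) auto
    also have "\<dots> = ennreal (m + R)"
      using mB R m0 Bs by (simp add: distrib_right nn_integral_add nn_integral_cmult_indicator nn_integral_indicator)
    finally obtain a where a: "(\<integral>\<^sup>+ z\<in>B. ennreal (F z) \<partial>lborel) = ennreal a" "a \<ge> 0"
      by (cases "(\<integral>\<^sup>+ z\<in>B. ennreal (F z) \<partial>lborel)") (auto simp: top_unique)
    have jen: "a powr r \<le> m powr (r - 1) * R"
      by (rule jensen_nn[OF r mF F0 Bs mB m0 a R])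
    have "ennreal (m * norm (f y)) = (\<integral>\<^sup>+ z\<in>B. ennreal (norm (f y)) \<partial>lborel)"
      using mB m0 nn_integral_cmult_indicator[OF Bs, of "ennreal (norm (f y))"] by (simp add: ennreal_mult mult.commute)
    also have "\<dots> \<le> (\<integral>\<^sup>+ z\<in>B. (ennreal (F z) + ennreal (norm (f z))) \<partial>lborel)"
      unfolding F_def
      by (intro nn_integral_mono mult_right_mono)
         (auto simp: ennreal_plus[symmetric] simp del: ennreal_plus intro!: ennreal_leI,
          metis add.commute norm_triangle_sub)
    also have "\<dots> = ennreal a + (\<integral>\<^sup>+ z\<in>B. ennreal (norm (f z)) \<partial>lborel)"
      using a by (simp add: distrib_right nn_integral_add)
    also have "\<dots> \<le> ennreal (a + I)"
      using J a I0 unfolding B_def by (simp add: add_left_mono)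
    finally have "m * norm (f y) \<le> a + I" using ennreal_le_iff[of "a + I" "m * norm (f y)"] a I0 by simp
    then have fy: "norm (f y) \<le> (a + I) / m" using m0 by (simp add: field_simps)
    have "norm (f y) powr r \<le> ((a + I) / m) powr r"
      using fy r by (intro powr_mono2) auto
    also have "\<dots> = (a + I) powr r * m powr (-r)"
      using m0 a I0 by (simp add: powr_divide powr_minus_divide)
    also have "\<dots> \<le> (2 powr r * (a powr r + I powr r)) * m powr (-r)"
      using sum_powr_le[OF a(2) I0, of r] r by (intro mult_right_mono) auto
    also have "\<dots> \<le> (2 powr r * (m powr (r - 1) * (m + e) + I powr r)) * m powr (-r)"
    proof -
      have "a powr r \<le> m powr (r - 1) * (m + e)"
        using jen Rme m0 by (smt (verit) mult_left_mono powr_ge_zero)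
      then show ?thesis by (intro mult_right_mono mult_left_mono) auto
    qed
    also have "\<dots> = c1 * e + c2"
    proof -
      have "m powr (r - 1) * m powr (-r) = 1 / m"
        using m0 by (simp only: powr_add[symmetric]) (simp add: powr_minus_divide)
      moreover have "(2 powr r * (m powr (r - 1) * (m + e) + I powr r)) * m powr (-r)
          = 2 powr r * (m + e) * (m powr (r - 1) * m powr (-r)) + 2 powr r * m powr (-r) * I powr r"
        by (simp add: algebra_simps)
      ultimately have "(2 powr r * (m powr (r - 1) * (m + e) + I powr r)) * m powr (-r)
          = 2 powr r * (m + e) / m + 2 powr r * m powr (-r) * I powr r" by simp
      also have "2 powr r * (m + e) / m = 2 powr r + 2 powr r / m * e" using m0 by (simp add: field_simps)
      finally show ?thesis unfolding c1_def c2_def by simp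
    qed
    finally show ?thesis using e c1 c2
      by (simp add: ennreal_mult[symmetric] ennreal_plus[symmetric] del: ennreal_plus)
  qed
  have "(\<integral>\<^sup>+ y\<in>B. ennreal (norm (f y) powr r) \<partial>lborel) \<le> (\<integral>\<^sup>+ y\<in>B. (ennreal c1 * E y + ennreal c2) \<partial>lborel)"
    using pt by (intro nn_integral_mono) (auto simp: indicator_def)
  also have "\<dots> = ennreal c1 * (\<integral>\<^sup>+ y\<in>B. E y \<partial>lborel) + ennreal c2 * ennreal m"
    using mB Bs by (simp add: distrib_right nn_integral_add nn_integral_cmult nn_integral_cmult_indicator mult.assoc nn_integral_indicator)
  also have "(\<integral>\<^sup>+ y\<in>B. E y \<partial>lborel) \<le> ennreal M0"
    using osc unfolding E_def B_def .
  then have "ennreal c1 * (\<integral>\<^sup>+ y\<in>B. E y \<partial>lborel) + ennreal c2 * ennreal m \<le> ennreal c1 * ennreal M0 + ennreal c2 * ennreal m"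
    by (intro add_right_mono mult_left_mono) auto
  finally show ?thesis
    using c1 c2 M0 m0 unfolding c1_def[symmetric] c2_def[symmetric] B_def
    by (simp add: ennreal_mult[symmetric] ennreal_plus[symmetric] del: ennreal_plus)
qed

lemma coef_time:
  fixes f :: "real \<Rightarrow> 'a::euclidean_space \<Rightarrow> 'v::euclidean_space" and IA :: "real \<Rightarrow> ennreal"
  assumes r: "r > 1" and q: "r \<le> q" and rho: "\<rho> > 0"
    and mf: "(\<lambda>(t,x). f t x) \<in> borel_measurable (lborel \<Otimes>\<^sub>M lborel)"
    and osc: "\<And>t. (\<integral>\<^sup>+ y\<in>ball x0 \<rho>. (\<integral>\<^sup>+ z\<in>ball x0 \<rho>. ennreal (norm (f t y - f t z) powr q) \<partial>lborel) \<partial>lborel) \<le> ennreal M0"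
    and M0: "M0 \<ge> 0"
    and IA: "\<And>t. (\<integral>\<^sup>+ z\<in>ball x0 \<rho>. ennreal (norm (f t z)) \<partial>lborel) \<le> IA t"
    and IAae: "AE t in lborel. IA t < \<infinity>"
    and IAm: "IA \<in> borel_measurable lborel"
    and IAint: "(\<integral>\<^sup>+ t\<in>{-T'..T'}. ennreal (enn2real (IA t) powr r) \<partial>lborel) < \<infinity>"
  shows "(\<integral>\<^sup>+ t\<in>{-T'..T'}. (\<integral>\<^sup>+ y\<in>ball x0 \<rho>. ennreal (norm (f t y) powr r) \<partial>lborel) \<partial>lborel) < \<infinity>"
proof -
  define m where "m = measure lborel (ball x0 \<rho>)"
  have m0: "m > 0" unfolding m_def using content_ball_pos[OF rho] by simp
  define C0 where "C0 = 2 powr r / m * M0 + 2 powr r * m"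
  define C3 where "C3 = 2 powr r * m powr (-r) * m"
  have C0: "C0 \<ge> 0" unfolding C0_def using m0 M0 by simp
  have C3: "C3 \<ge> 0" unfolding C3_def using m0 by simp
  have "AE t in lborel. (\<integral>\<^sup>+ y\<in>ball x0 \<rho>. ennreal (norm (f t y) powr r) \<partial>lborel) * indicator {-T'..T'} t
      \<le> ennreal (C0 + C3 * enn2real (IA t) powr r) * indicator {-T'..T'} t"
    using IAae
  proof eventually_elim
    case (elim t)
    have mft: "f t \<in> borel_measurable lborel" using slice_meas[OF mf] by simp
    have J: "(\<integral>\<^sup>+ z\<in>ball x0 \<rho>. ennreal (norm (f t z)) \<partial>lborel) \<le> ennreal (enn2real (IA t))"
      using IA[of t] elim by (simp add: ennreal_enn2real_if)
    have "(\<integral>\<^sup>+ y\<in>ball x0 \<rho>. ennreal (norm (f t y) powr r) \<partial>lborel)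
       \<le> ennreal (2 powr r / m * M0 + (2 powr r + 2 powr r * m powr (-r) * enn2real (IA t) powr r) * m)"
      by (rule ball_bound[OF r q mft rho m_def osc M0 J]) simp
    also have "2 powr r / m * M0 + (2 powr r + 2 powr r * m powr (-r) * enn2real (IA t) powr r) * m
       = C0 + C3 * enn2real (IA t) powr r"
      unfolding C0_def C3_def by (simp add: algebra_simps)
    finally show ?case by (intro mult_right_mono) auto
  qed
  then have "(\<integral>\<^sup>+ t\<in>{-T'..T'}. (\<integral>\<^sup>+ y\<in>ball x0 \<rho>. ennreal (norm (f t y) powr r) \<partial>lborel) \<partial>lborel)
      \<le> (\<integral>\<^sup>+ t\<in>{-T'..T'}. (ennreal C0 + ennreal C3 * ennreal (enn2real (IA t) powr r)) \<partial>lborel)"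
    using C0 C3 by (intro nn_integral_mono_AE) (simp add: ennreal_mult[symmetric] ennreal_plus[symmetric] del: ennreal_plus)
  also have "\<dots> = ennreal C0 * emeasure lborel {-T'..T'} + ennreal C3 * (\<integral>\<^sup>+ t\<in>{-T'..T'}. ennreal (enn2real (IA t) powr r) \<partial>lborel)"
    using IAm by (simp add: distrib_right nn_integral_add nn_integral_cmult nn_integral_cmult_indicator mult.assoc nn_integral_indicator)
  also have "\<dots> < \<infinity>"
  proof -
    have "emeasure lborel {-T'..T'} < \<infinity>" by (rule emeasure_bounded_finite) simp
    then show ?thesis using IAint by (simp add: ennreal_mult_less_top)
  qed
  finally show ?thesis .
qed

lemma coef_g:
  fixes f :: "real \<Rightarrow> 'a::euclidean_space \<Rightarrow> 'v::euclidean_space" and \<psi> :: "'a \<Rightarrow> real"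
  assumes r: "r > 0" and rho: "\<rho> > 0"
    and mf: "(\<lambda>(t,x). f t x) \<in> borel_measurable (lborel \<Otimes>\<^sub>M lborel)"
    and psi0: "\<And>x. \<psi> x \<ge> 0" and psiM: "\<And>x. \<psi> x \<le> M" and psiS: "\<And>x. x \<notin> S \<Longrightarrow> \<psi> x = 0"
    and S: "compact S"
    and bfin: "\<And>x0 T'. (\<integral>\<^sup>+ t\<in>{-T'..T'}. (\<integral>\<^sup>+ y\<in>ball x0 \<rho>. ennreal (norm (f t y) powr r) \<partial>lborel) \<partial>lborel) < \<infinity>"
  shows "(\<integral>\<^sup>+ t\<in>{-T'..T'}. (\<integral>\<^sup>+ x. ennreal ((norm (f t x) * \<psi> x) powr r) \<partial>lborel) \<partial>lborel) < \<infinity>"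
proof -
  obtain X where X: "X \<subseteq> S" "finite X" "S \<subseteq> (\<Union>c\<in>X. ball c \<rho>)"
    by (rule compactE_image[OF S, of S "\<lambda>c. ball c \<rho>"]) (use rho in auto)
  define K where "K = M powr r"
  have K0: "K \<ge> 0" unfolding K_def by simp
  define G where "G c t = (\<integral>\<^sup>+ y\<in>ball c \<rho>. ennreal (norm (f t y) powr r) \<partial>lborel)" for c t
  have mG: "G c \<in> borel_measurable lborel" for c
  proof -
    have [measurable]: "ball c \<rho> \<in> sets lborel" by simp
    have "(\<lambda>(t,y). ennreal (norm (f t y) powr r) * indicator (ball c \<rho>) y) \<in> borel_measurable (lborel \<Otimes>\<^sub>M lborel)"
      using mf by measurable
    from lborel.borel_measurable_nn_integral[OF this] show ?thesis unfolding G_def by simp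
  qed
  have pt: "ennreal ((norm (f t x) * \<psi> x) powr r) \<le> (\<Sum>c\<in>X. ennreal K * (ennreal (norm (f t x) powr r) * indicator (ball c \<rho>) x))" for t x
  proof (cases "\<psi> x = 0")
    case True then show ?thesis by simp
  next
    case False
    then have "x \<in> S" using psiS by blast
    then obtain c where c: "c \<in> X" "x \<in> ball c \<rho>" using X(3) by auto
    have "(norm (f t x) * \<psi> x) powr r = norm (f t x) powr r * \<psi> x powr r"
      using psi0 by (simp add: powr_mult)
    also have "\<dots> \<le> norm (f t x) powr r * K"
      unfolding K_def using psi0 psiM r by (intro mult_left_mono powr_mono2) auto
    finally have "ennreal ((norm (f t x) * \<psi> x) powr r) \<le> ennreal K * (ennreal (norm (f t x) powr r) * indicator (ball c \<rho>) x)"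
      using c K0 by (simp add: ennreal_mult[symmetric] mult.commute ennreal_leI)
    also have "\<dots> \<le> (\<Sum>c\<in>X. ennreal K * (ennreal (norm (f t x) powr r) * indicator (ball c \<rho>) x))"
      by (rule member_le_sum) (use c X in auto)
    finally show ?thesis .
  qed
  have inner: "(\<integral>\<^sup>+ x. ennreal ((norm (f t x) * \<psi> x) powr r) \<partial>lborel) \<le> (\<Sum>c\<in>X. ennreal K * G c t)" for t
  proof -
    have mft: "f t \<in> borel_measurable lborel" using slice_meas[OF mf] by simp
    have "(\<integral>\<^sup>+ x. ennreal ((norm (f t x) * \<psi> x) powr r) \<partial>lborel)
        \<le> (\<integral>\<^sup>+ x. (\<Sum>c\<in>X. ennreal K * (ennreal (norm (f t x) powr r) * indicator (ball c \<rho>) x)) \<partial>lborel)"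
      by (intro nn_integral_mono pt)
    also have "\<dots> = (\<Sum>c\<in>X. ennreal K * G c t)"
    proof -
      have mi: "(\<lambda>x. ennreal (norm (f t x) powr r) * indicator (ball c \<rho>) x) \<in> borel_measurable lborel" for c
      proof -
        have [measurable]: "ball c \<rho> \<in> sets lborel" "f t \<in> borel_measurable lborel" using mft by auto
        show ?thesis by measurable
      qed
      have "(\<integral>\<^sup>+ x. (\<Sum>c\<in>X. ennreal K * (ennreal (norm (f t x) powr r) * indicator (ball c \<rho>) x)) \<partial>lborel)
          = (\<Sum>c\<in>X. (\<integral>\<^sup>+ x. ennreal K * (ennreal (norm (f t x) powr r) * indicator (ball c \<rho>) x) \<partial>lborel))"
        using mi by (intro nn_integral_sum) auto
      also have "\<dots> = (\<Sum>c\<in>X. ennreal K * G c t)"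
        unfolding G_def using mi by (intro sum.cong refl nn_integral_cmult)
      finally show ?thesis .
    qed
    finally show ?thesis .
  qed
  have "(\<integral>\<^sup>+ t\<in>{-T'..T'}. (\<integral>\<^sup>+ x. ennreal ((norm (f t x) * \<psi> x) powr r) \<partial>lborel) \<partial>lborel)
      \<le> (\<integral>\<^sup>+ t. (\<Sum>c\<in>X. ennreal K * (G c t * indicator {-T'..T'} t)) \<partial>lborel)"
  proof (intro nn_integral_mono)
    fix t
    have "(\<Sum>c\<in>X. ennreal K * (G c t * indicator {-T'..T'} t)) = (\<Sum>c\<in>X. ennreal K * G c t) * indicator {-T'..T'} t"
      by (simp add: sum_distrib_right mult.assoc)
    then show "(\<integral>\<^sup>+ x. ennreal ((norm (f t x) * \<psi> x) powr r) \<partial>lborel) * indicator {-T'..T'} t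
      \<le> (\<Sum>c\<in>X. ennreal K * (G c t * indicator {-T'..T'} t))"
      using inner[of t] by (simp add: mult_right_mono)
  qed
  also have "\<dots> = (\<Sum>c\<in>X. ennreal K * (\<integral>\<^sup>+ t\<in>{-T'..T'}. G c t \<partial>lborel))"
    using mG by (subst nn_integral_sum) (auto simp: nn_integral_cmult)
  also have "\<dots> < \<infinity>"
    using X(2) bfin unfolding G_def by (simp add: ennreal_sum_less_top ennreal_mult_less_top)
  finally show ?thesis .
qed

lemma shift_meas:
  fixes F :: "real \<Rightarrow> 'a::euclidean_space \<Rightarrow> 'b::topological_space"
  assumes "(\<lambda>(t,x). F t x) \<in> borel_measurable borel"
  shows "(\<lambda>(t,y). F t (x0 + y)) \<in> borel_measurable borel"
proof -
  have c: "(\<lambda>z::real \<times> 'a. (fst z, x0 + snd z)) \<in> borel_measurable borel"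
    by (intro borel_measurable_continuous_onI continuous_intros)
  have "(\<lambda>(t,y). F t (x0 + y)) = (\<lambda>(t,x). F t x) \<circ> (\<lambda>z. (fst z, x0 + snd z))"
    by (auto simp: fun_eq_iff)
  then show ?thesis using measurable_comp[OF c assms] by simp
qed

lemma trans_ball:
  fixes F :: "'a::euclidean_space \<Rightarrow> ennreal"
  assumes mF: "F \<in> borel_measurable borel"
  shows "(\<integral>\<^sup>+ y\<in>ball 0 1. F (x0 + y) \<partial>lborel) = (\<integral>\<^sup>+ y\<in>ball x0 1. F y \<partial>lborel)"
proof -
  have "(\<integral>\<^sup>+ y\<in>ball x0 1. F y \<partial>lborel) = (\<integral>\<^sup>+ y. F y * indicator (ball x0 1) y \<partial>(distr lborel borel ((+) x0)))"
    by (simp add: lborel_distr_plus)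
  also have "\<dots> = (\<integral>\<^sup>+ y. F (x0 + y) * indicator (ball x0 1) (x0 + y) \<partial>lborel)"
  proof -
    have [measurable]: "ball x0 1 \<in> sets borel" "F \<in> borel_measurable borel" using mF by auto
    show ?thesis by (subst nn_integral_distr) auto
  qed
  also have "\<dots> = (\<integral>\<^sup>+ y\<in>ball 0 1. F (x0 + y) \<partial>lborel)"
    by (intro nn_integral_cong) (auto simp: indicator_def dist_norm)
  finally show ?thesis ..
qed

lemma partial_zero:
  fixes \<phi> :: "real^'d::finite \<Rightarrow> real"
  assumes x: "x \<notin> closure {x. \<phi> x \<noteq> 0}"
  shows "partial i \<phi> x = 0"
proof -
  have "open (- closure {x. \<phi> x \<noteq> 0})" by auto
  then obtain e where e: "e > 0" "ball x e \<subseteq> - closure {x. \<phi> x \<noteq> 0}"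
    using x by (meson ComplI open_contains_ball)
  have ev: "\<forall>\<^sub>F s in nhds 0. \<phi> (x + s *\<^sub>R axis i 1) = 0"
    unfolding eventually_nhds_metric
  proof (intro exI[of _ e] conjI allI impI e(1))
    fix s :: real assume "dist s 0 < e"
    then have "x + s *\<^sub>R axis i 1 \<in> ball x e" by (simp add: dist_norm)
    then have "x + s *\<^sub>R axis i 1 \<notin> closure {x. \<phi> x \<noteq> 0}" using e by auto
    then show "\<phi> (x + s *\<^sub>R axis i 1) = 0" using closure_subset[of "{x. \<phi> x \<noteq> 0}"] by auto
  qed
  have "((\<lambda>s. \<phi> (x + s *\<^sub>R axis i 1)) has_field_derivative 0) (at 0) = ((\<lambda>_. 0::real) has_field_derivative 0) (at 0)"
    by (rule DERIV_cong_ev) (use ev in auto)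
  then have "((\<lambda>s. \<phi> (x + s *\<^sub>R axis i 1)) has_field_derivative 0) (at 0)"
    by simp
  then show ?thesis unfolding partial_def by (rule DERIV_imp_deriv)
qed

lemma bounded_supp:
  fixes \<psi> :: "'a::euclidean_space \<Rightarrow> real"
  assumes "continuous_on UNIV \<psi>" "compact S" "\<And>x. x \<notin> S \<Longrightarrow> \<psi> x = 0"
  obtains M where "\<And>x. \<bar>\<psi> x\<bar> \<le> M"
proof -
  have "continuous_on S \<psi>" using assms(1) by (rule continuous_on_subset) auto
  then have "compact (\<psi> ` S)" using assms(2) by (rule compact_continuous_image)
  then obtain M where M: "\<And>y. y \<in> \<psi> ` S \<Longrightarrow> norm y \<le> M"
    using compact_imp_bounded bounded_iff by metis
  have "\<bar>\<psi> x\<bar> \<le> max M 0" for x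
    using M[of "\<psi> x"] assms(3)[of x] by (cases "x \<in> S") auto
  then show ?thesis using that by blast
qed



lemma meas_conv:
  fixes f :: "real \<times> 'b::euclidean_space \<Rightarrow> 'c::topological_space"
  assumes "f \<in> borel_measurable borel"
  shows "f \<in> borel_measurable (lborel \<Otimes>\<^sub>M lborel)"
  using assms by (simp add: lborel_prod)

theorem corollary5p6:
  fixes p q K \<rho>0 \<rho>1 \<gamma> T :: real
    and a :: "real \<Rightarrow> real^'d::finite \<Rightarrow> real^'d^'d"
    and bb b :: "real \<Rightarrow> real^'d \<Rightarrow> real^'d"
    and c :: "real \<Rightarrow> real^'d \<Rightarrow> real"
    and \<phi> :: "real^'d \<Rightarrow> real"
  assumes p: "1 < p"
    and K: "0 \<le> K"
    and rho0: "0 < \<rho>0" "\<rho>0 \<le> 1"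
    and rho1: "0 < \<rho>1" "\<rho>1 \<le> 1"
    and q: "q > min (real CARD('d)) p" "q > min (real CARD('d)) (p / (p - 1))"
           "q \<ge> max (real CARD('d)) (max p (p / (p - 1)))"
    and gamma: "0 < \<gamma>" "\<gamma> \<le> 1"
    and A: "assumption_A p a bb b c"
    and B: "assumption_B q K \<rho>1 \<gamma> bb b c"
    and C: "assumption_C \<rho>0 \<gamma> a"
    and phi: "test_fn \<phi>"
    and T: "0 < T"
  shows "cont_op p T (\<lambda>u Du t x. (b t x \<bullet> Du t x) * \<phi> x)
       \<and> cont_op p T (\<lambda>u Du t x. u t x * (bb t x \<bullet> grad \<phi> x))
       \<and> cont_op p T (\<lambda>u Du t x. c t x * u t x * \<phi> x)"
proof -
  define r where "r = p / (p - 1)"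
  have r1: "r > 1" using p unfolding r_def by (simp add: less_divide_eq)
  have rq: "r \<le> q" using q(3) unfolding r_def by (metis max.bounded_iff)
  have mbbB: "(\<lambda>(t,x). bb t x) \<in> borel_measurable borel"
    and mbB: "(\<lambda>(t,x). b t x) \<in> borel_measurable borel"
    and mcB: "(\<lambda>(t,x). c t x) \<in> borel_measurable borel"
    and c0: "\<And>t x. c t x \<ge> 0"
    and A5: "\<forall>x. let I = (\<lambda>t. \<integral>\<^sup>+ y\<in>ball 0 1. ennreal (norm (bb t (x + y)) + norm (b t (x + y)) + c t (x + y)) \<partial>lborel)
         in (AE t in lborel. I t < \<infinity>) \<and>
            (\<forall>r1 r2. (\<integral>\<^sup>+ t\<in>{r1..r2}. ennreal (enn2real (I t) powr (p / (p - 1))) \<partial>lborel) < \<infinity>)"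
    using A unfolding assumption_A_def by auto
  have mbb[measurable]: "(\<lambda>(t,x). bb t x) \<in> borel_measurable (lborel \<Otimes>\<^sub>M lborel)"
    using meas_conv[OF mbbB] .
  have mb[measurable]: "(\<lambda>(t,x). b t x) \<in> borel_measurable (lborel \<Otimes>\<^sub>M lborel)"
    using meas_conv[OF mbB] .
  have mc[measurable]: "(\<lambda>(t,x). c t x) \<in> borel_measurable (lborel \<Otimes>\<^sub>M lborel)"
    using meas_conv[OF mcB] .
  define IA where "IA x0 t = (\<integral>\<^sup>+ y\<in>ball 0 1. ennreal (norm (bb t (x0 + y)) + norm (b t (x0 + y)) + c t (x0 + y)) \<partial>lborel)" for x0 t
  have IAae: "AE t in lborel. IA x0 t < \<infinity>" for x0
    using A5 unfolding IA_def Let_def by blast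
  have IAint: "(\<integral>\<^sup>+ t\<in>{-T'..T'}. ennreal (enn2real (IA x0 t) powr r) \<partial>lborel) < \<infinity>" for x0 T'
    using A5 unfolding IA_def Let_def r_def by blast
  have IAm: "IA x0 \<in> borel_measurable lborel" for x0
  proof -
    have [measurable]: "(\<lambda>(t,y). bb t (x0 + y)) \<in> borel_measurable (lborel \<Otimes>\<^sub>M lborel)"
      "(\<lambda>(t,y). b t (x0 + y)) \<in> borel_measurable (lborel \<Otimes>\<^sub>M lborel)"
      "(\<lambda>(t,y). c t (x0 + y)) \<in> borel_measurable (lborel \<Otimes>\<^sub>M lborel)"
      using meas_conv[OF shift_meas[OF mbbB]] meas_conv[OF shift_meas[OF mbB]] meas_conv[OF shift_meas[OF mcB]] by auto
    have [measurable]: "ball (0::real^'d) 1 \<in> sets lborel" by simp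
    have "(\<lambda>(t,y). ennreal (norm (bb t (x0 + y)) + norm (b t (x0 + y)) + c t (x0 + y)) * indicator (ball 0 1) y)
       \<in> borel_measurable (lborel \<Otimes>\<^sub>M lborel)"
      by measurable
    from lborel.borel_measurable_nn_integral[OF this] show ?thesis unfolding IA_def by simp
  qed
  define M0 where "M0 = (if q > real CARD('d) then K else 0) + \<rho>1 ^ CARD('d) * \<gamma>"
  have M0: "M0 \<ge> 0" unfolding M0_def using K rho1 gamma by simp
  have Bt: "(\<integral>\<^sup>+ y\<in>ball x0 \<rho>1. (\<integral>\<^sup>+ z\<in>ball x0 \<rho>1.
              ennreal (norm (bb t y - bb t z) powr q + norm (b t y - b t z) powr q
                       + \<bar>c t y - c t z\<bar> powr q) \<partial>lborel) \<partial>lborel) \<le> ennreal M0" for t x0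
    using B unfolding assumption_B_def M0_def by blast
  have IAeq: "IA x0 t = (\<integral>\<^sup>+ y\<in>ball x0 1. ennreal (norm (bb t y) + norm (b t y) + c t y) \<partial>lborel)" for x0 t
  proof -
    have [measurable]: "bb t \<in> borel_measurable borel" "b t \<in> borel_measurable borel" "c t \<in> borel_measurable borel"
      using slice_meas[OF mbb] slice_meas[OF mb] slice_meas[OF mc] by (auto simp: measurable_lborel2)
    have "(\<lambda>y. ennreal (norm (bb t y) + norm (b t y) + c t y)) \<in> borel_measurable borel" by measurable
    from trans_ball[OF this] show ?thesis unfolding IA_def by simp
  qed
  have IAle: "(\<integral>\<^sup>+ z\<in>ball x0 \<rho>1. ennreal (F z) \<partial>lborel) \<le> IA x0 t"
    if "\<And>z. F z \<le> norm (bb t z) + norm (b t z) + c t z" for F x0 t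
    unfolding IAeq
  proof (intro nn_integral_mono)
    fix z
    have "ennreal (F z) \<le> ennreal (norm (bb t z) + norm (b t z) + c t z)"
      using that[of z] by (rule ennreal_leI)
    moreover have "indicator (ball x0 \<rho>1) z \<le> (indicator (ball x0 1) z :: ennreal)"
      using rho1 by (auto simp: indicator_def)
    ultimately show "ennreal (F z) * indicator (ball x0 \<rho>1) z \<le> ennreal (norm (bb t z) + norm (b t z) + c t z) * indicator (ball x0 1) z"
      by (intro mult_mono) auto
  qed
  have mt: "bb t \<in> borel_measurable lborel" "b t \<in> borel_measurable lborel" "c t \<in> borel_measurable lborel" for t
    using slice_meas[OF mbb] slice_meas[OF mb] slice_meas[OF mc] by auto
  have oscbb: "(\<integral>\<^sup>+ y\<in>ball x0 \<rho>1. (\<integral>\<^sup>+ z\<in>ball x0 \<rho>1. ennreal (norm (bb t y - bb t z) powr q) \<partial>lborel) \<partial>lborel) \<le> ennreal M0" for t x0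
    by (rule order_trans[OF _ Bt[of t x0]]) (intro nn_integral_mono mult_right_mono ennreal_leI; simp)
  have oscb: "(\<integral>\<^sup>+ y\<in>ball x0 \<rho>1. (\<integral>\<^sup>+ z\<in>ball x0 \<rho>1. ennreal (norm (b t y - b t z) powr q) \<partial>lborel) \<partial>lborel) \<le> ennreal M0" for t x0
    by (rule order_trans[OF _ Bt[of t x0]]) (intro nn_integral_mono mult_right_mono ennreal_leI; simp)
  have oscc: "(\<integral>\<^sup>+ y\<in>ball x0 \<rho>1. (\<integral>\<^sup>+ z\<in>ball x0 \<rho>1. ennreal (norm (c t y - c t z) powr q) \<partial>lborel) \<partial>lborel) \<le> ennreal M0" for t x0
    by (rule order_trans[OF _ Bt[of t x0]]) (intro nn_integral_mono mult_right_mono ennreal_leI; simp)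
  have bfin_bb: "(\<integral>\<^sup>+ t\<in>{-T'..T'}. (\<integral>\<^sup>+ y\<in>ball x0 \<rho>1. ennreal (norm (bb t y) powr r) \<partial>lborel) \<partial>lborel) < \<infinity>" for x0 T'
    by (rule coef_time[OF r1 rq rho1(1) mbb oscbb M0 IAle IAae IAm IAint]) (use c0 in simp)
  have bfin_b: "(\<integral>\<^sup>+ t\<in>{-T'..T'}. (\<integral>\<^sup>+ y\<in>ball x0 \<rho>1. ennreal (norm (b t y) powr r) \<partial>lborel) \<partial>lborel) < \<infinity>" for x0 T'
    by (rule coef_time[OF r1 rq rho1(1) mb oscb M0 IAle IAae IAm IAint]) (use c0 in simp)
  have bfin_c: "(\<integral>\<^sup>+ t\<in>{-T'..T'}. (\<integral>\<^sup>+ y\<in>ball x0 \<rho>1. ennreal (norm (c t y) powr r) \<partial>lborel) \<partial>lborel) < \<infinity>" for x0 T'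
    by (rule coef_time[OF r1 rq rho1(1) mc oscc M0 IAle IAae IAm IAint]) (use c0 in simp)
  define S where "S = closure {x. \<phi> x \<noteq> 0}"
  have sm: "smooth_fn \<phi>" and Sc: "compact S" using phi unfolding test_fn_def S_def by auto
  have phic: "continuous_on UNIV \<phi>" and smp: "\<And>i. smooth_fn (partial i \<phi>)"
    using sm by (cases rule: smooth_fn.cases, auto)+
  have pc: "continuous_on UNIV (partial i \<phi>)" for i
    using smp[of i] by (cases rule: smooth_fn.cases) auto
  have gradc: "continuous_on UNIV (grad \<phi>)"
    unfolding grad_def by (intro continuous_on_vec_lambda pc)
  have phiS: "\<phi> x = 0" if "x \<notin> S" for x
  proof -
    have "x \<notin> {x. \<phi> x \<noteq> 0}" using that closure_subset[of "{x. \<phi> x \<noteq> 0}"] unfolding S_def by blast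
    then show ?thesis by simp
  qed
  have gradS: "grad \<phi> x = 0" if "x \<notin> S" for x
    unfolding grad_def using partial_zero[of x \<phi>] that unfolding S_def by (simp add: vec_eq_iff)
  obtain M1 where M1: "\<And>x. \<bar>\<phi> x\<bar> \<le> M1"
    using bounded_supp[OF phic Sc phiS] by blast
  have ngc: "continuous_on UNIV (\<lambda>x. norm (grad \<phi> x))" using gradc by (intro continuous_intros)
  have ng0: "norm (grad \<phi> x) = 0" if "x \<notin> S" for x using gradS[OF that] by simp
  obtain M2 where M2: "\<And>x. \<bar>norm (grad \<phi> x)\<bar> \<le> M2"
    using bounded_supp[OF ngc Sc ng0] by blast
  have mphi[measurable]: "\<phi> \<in> borel_measurable lborel"
    using borel_measurable_continuous_onI[OF phic] by (simp add: measurable_lborel2)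
  have mgrad[measurable]: "grad \<phi> \<in> borel_measurable lborel"
    using borel_measurable_continuous_onI[OF gradc] by (simp add: measurable_lborel2)
  have g1: "(\<integral>\<^sup>+ t\<in>{-T'..T'}. (\<integral>\<^sup>+ x. ennreal ((norm (b t x) * \<bar>\<phi> x\<bar>) powr r) \<partial>lborel) \<partial>lborel) < \<infinity>" for T'
    by (rule coef_g[OF _ rho1(1) mb _ M1 _ Sc bfin_b]) (use r1 phiS in simp_all)
  have g2: "(\<integral>\<^sup>+ t\<in>{-T'..T'}. (\<integral>\<^sup>+ x. ennreal ((norm (bb t x) * norm (grad \<phi> x)) powr r) \<partial>lborel) \<partial>lborel) < \<infinity>" for T'
    by (rule coef_g[OF _ rho1(1) mbb _ _ _ Sc bfin_bb, where M=M2]) (use r1 ng0 M2 in simp_all)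
  have g3: "(\<integral>\<^sup>+ t\<in>{-T'..T'}. (\<integral>\<^sup>+ x. ennreal ((norm (c t x) * \<bar>\<phi> x\<bar>) powr r) \<partial>lborel) \<partial>lborel) < \<infinity>" for T'
    by (rule coef_g[OF _ rho1(1) mc _ M1 _ Sc bfin_c]) (use r1 phiS in simp_all)
  have gen: "cont_op p T h"
    if hlin: "\<And>u Du v Dv t x. h u Du t x - h v Dv t x = h (\<lambda>t x. u t x - v t x) (\<lambda>t x. Du t x - Dv t x) t x"
    and hb: "\<And>u Du t x. \<bar>h u Du t x\<bar> \<le> g t x * (\<bar>u t x\<bar> + norm (Du t x))"
    and hm: "\<And>u Du. (\<lambda>(t,x). u t x) \<in> borel_measurable (lborel \<Otimes>\<^sub>M lborel) \<Longrightarrow>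
               (\<lambda>(t,x). Du t x) \<in> borel_measurable (lborel \<Otimes>\<^sub>M lborel) \<Longrightarrow>
               (\<lambda>(t,x). h u Du t x) \<in> borel_measurable (lborel \<Otimes>\<^sub>M lborel)"
    and mg: "(\<lambda>(t,x). g t x) \<in> borel_measurable (lborel \<Otimes>\<^sub>M lborel)"
    and g0: "\<And>t x. g t x \<ge> 0"
    and gint: "\<And>T'. (\<integral>\<^sup>+ t\<in>{-T'..T'}. (\<integral>\<^sup>+ x. ennreal (g t x powr r) \<partial>lborel) \<partial>lborel) < \<infinity>"
    for h :: "(real \<Rightarrow> real^'d \<Rightarrow> real) \<Rightarrow> (real \<Rightarrow> real^'d \<Rightarrow> real^'d) \<Rightarrow> real \<Rightarrow> real^'d \<Rightarrow> real"
      and g :: "real \<Rightarrow> real^'d \<Rightarrow> real"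
    by (rule generic_cont_op[OF p T hlin hb hm mg g0 gint[unfolded r_def]])
  have op1: "cont_op p T (\<lambda>u Du t x. (b t x \<bullet> Du t x) * \<phi> x)"
  proof (rule gen[where g="\<lambda>t x. norm (b t x) * \<bar>\<phi> x\<bar>"])
    show "(b t x \<bullet> Du t x) * \<phi> x - (b t x \<bullet> Dv t x) * \<phi> x = (b t x \<bullet> (Du t x - Dv t x)) * \<phi> x"
      for Du Dv :: "real \<Rightarrow> real^'d \<Rightarrow> real^'d" and t x
      by (simp add: inner_diff_right algebra_simps)
    show "\<bar>(b t x \<bullet> Du t x) * \<phi> x\<bar> \<le> norm (b t x) * \<bar>\<phi> x\<bar> * (\<bar>u t x\<bar> + norm (Du t x))"
      for u :: "real \<Rightarrow> real^'d \<Rightarrow> real" and Du :: "real \<Rightarrow> real^'d \<Rightarrow> real^'d" and t x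
    proof -
      have "\<bar>(b t x \<bullet> Du t x) * \<phi> x\<bar> = \<bar>b t x \<bullet> Du t x\<bar> * \<bar>\<phi> x\<bar>" by (simp add: abs_mult)
      also have "\<dots> \<le> (norm (b t x) * norm (Du t x)) * \<bar>\<phi> x\<bar>"
        by (intro mult_right_mono Cauchy_Schwarz_ineq2) simp
      also have "\<dots> = (norm (b t x) * \<bar>\<phi> x\<bar>) * norm (Du t x)" by simp
      also have "\<dots> \<le> (norm (b t x) * \<bar>\<phi> x\<bar>) * (\<bar>u t x\<bar> + norm (Du t x))"
        by (intro mult_left_mono) auto
      finally show ?thesis .
    qed
    show "(\<lambda>(t,x). (b t x \<bullet> Du t x) * \<phi> x) \<in> borel_measurable (lborel \<Otimes>\<^sub>M lborel)"
      if [measurable]: "(\<lambda>(t,x). Du t x) \<in> borel_measurable (lborel \<Otimes>\<^sub>M lborel)"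
      for Du :: "real \<Rightarrow> real^'d \<Rightarrow> real^'d"
      by measurable
    show "(\<lambda>(t,x). norm (b t x) * \<bar>\<phi> x\<bar>) \<in> borel_measurable (lborel \<Otimes>\<^sub>M lborel)"
      by measurable
  qed (use g1 in auto)
  have op2: "cont_op p T (\<lambda>u Du t x. u t x * (bb t x \<bullet> grad \<phi> x))"
  proof (rule gen[where g="\<lambda>t x. norm (bb t x) * norm (grad \<phi> x)"])
    show "u t x * (bb t x \<bullet> grad \<phi> x) - v t x * (bb t x \<bullet> grad \<phi> x) = (u t x - v t x) * (bb t x \<bullet> grad \<phi> x)"
      for u v :: "real \<Rightarrow> real^'d \<Rightarrow> real" and t x
      by (simp add: algebra_simps)
    show "\<bar>u t x * (bb t x \<bullet> grad \<phi> x)\<bar> \<le> norm (bb t x) * norm (grad \<phi> x) * (\<bar>u t x\<bar> + norm (Du t x))"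
      for u :: "real \<Rightarrow> real^'d \<Rightarrow> real" and Du :: "real \<Rightarrow> real^'d \<Rightarrow> real^'d" and t x
    proof -
      have "\<bar>u t x * (bb t x \<bullet> grad \<phi> x)\<bar> = \<bar>bb t x \<bullet> grad \<phi> x\<bar> * \<bar>u t x\<bar>" by (simp add: abs_mult)
      also have "\<dots> \<le> (norm (bb t x) * norm (grad \<phi> x)) * \<bar>u t x\<bar>"
        by (intro mult_right_mono Cauchy_Schwarz_ineq2) simp
      also have "\<dots> \<le> (norm (bb t x) * norm (grad \<phi> x)) * (\<bar>u t x\<bar> + norm (Du t x))"
        by (intro mult_left_mono) auto
      finally show ?thesis .
    qed
    show "(\<lambda>(t,x). u t x * (bb t x \<bullet> grad \<phi> x)) \<in> borel_measurable (lborel \<Otimes>\<^sub>M lborel)"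
      if [measurable]: "(\<lambda>(t,x). u t x) \<in> borel_measurable (lborel \<Otimes>\<^sub>M lborel)"
      for u :: "real \<Rightarrow> real^'d \<Rightarrow> real"
      by measurable
    show "(\<lambda>(t,x). norm (bb t x) * norm (grad \<phi> x)) \<in> borel_measurable (lborel \<Otimes>\<^sub>M lborel)"
      by measurable
  qed (use g2 in auto)
  have op3: "cont_op p T (\<lambda>u Du t x. c t x * u t x * \<phi> x)"
  proof (rule gen[where g="\<lambda>t x. norm (c t x) * \<bar>\<phi> x\<bar>"])
    show "c t x * u t x * \<phi> x - c t x * v t x * \<phi> x = c t x * (u t x - v t x) * \<phi> x"
      for u v :: "real \<Rightarrow> real^'d \<Rightarrow> real" and t x
      by (simp add: algebra_simps)
    show "\<bar>c t x * u t x * \<phi> x\<bar> \<le> norm (c t x) * \<bar>\<phi> x\<bar> * (\<bar>u t x\<bar> + norm (Du t x))"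
      for u :: "real \<Rightarrow> real^'d \<Rightarrow> real" and Du :: "real \<Rightarrow> real^'d \<Rightarrow> real^'d" and t x
    proof -
      have "\<bar>c t x * u t x * \<phi> x\<bar> = (norm (c t x) * \<bar>\<phi> x\<bar>) * \<bar>u t x\<bar>" by (simp add: abs_mult)
      also have "\<dots> \<le> (norm (c t x) * \<bar>\<phi> x\<bar>) * (\<bar>u t x\<bar> + norm (Du t x))"
        by (intro mult_left_mono) auto
      finally show ?thesis .
    qed
    show "(\<lambda>(t,x). c t x * u t x * \<phi> x) \<in> borel_measurable (lborel \<Otimes>\<^sub>M lborel)"
      if [measurable]: "(\<lambda>(t,x). u t x) \<in> borel_measurable (lborel \<Otimes>\<^sub>M lborel)"
      for u :: "real \<Rightarrow> real^'d \<Rightarrow> real"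
      by measurable
    show "(\<lambda>(t,x). norm (c t x) * \<bar>\<phi> x\<bar>) \<in> borel_measurable (lborel \<Otimes>\<^sub>M lborel)"
      by measurable
  qed (use g3 in auto)
  show ?thesis using op1 op2 op3 by blast
qed


end
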